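(* Let $k=k(n)$ and $m=m(n)$ be functions of $n$ such that $m\geq n$. (i) If $\liminf_{n\rightarrow\infty} \frac{k^2n}{m\log n}>1$, then asymptotically almost surely $G(n,m,k)$ is connected. (ii) If $\limsup_{n\rightarrow\infty} \frac{k^2n}{m\log n}<1$, then asymptotically almost surely $G(n,m,k)$ is not connected.
   Context: The uniform random intersection graph $G(n,m,k)$ (for positive integers $k\le m$) is the random graph on a set $V$ of $n$ nodes defined as follows: fix a set $M$ of $m$ colours; to each node $v\in V$ assign a subset $F_v\subseteq M$ of exactly $k$ distinct colours, chosen uniformly at random among all $k$-subsets of $M$, independently for different nodes; distinct nodes $u,v$ are joined by an edge if and only if $F_u\cap F_v\neq\emptyset$. An event holds asymptotically almost surely if its probability tends to $1$ as $n\rightarrow\infty$. Here $\log$ denotes the natural logarithm. *)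

theory Defs
  imports "HOL-Analysis.Analysis"
begin

text \<open>Sample space of the uniform random intersection graph G(n,m,k):
  nodes {..<n}, colours {..<m}; each node gets a k-subset of colours,
  independently and uniformly, i.e. the uniform distribution on all
  assignments below.\<close>
definition rig_space :: "nat \<Rightarrow> nat \<Rightarrow> nat \<Rightarrow> (nat \<Rightarrow> nat set) set" where
  "rig_space n m k = (\<Pi>\<^sub>E v\<in>{..<n}. {S. S \<subseteq> {..<m} \<and> card S = k})"

definition rig_edges :: "nat \<Rightarrow> (nat \<Rightarrow> nat set) \<Rightarrow> (nat \<times> nat) set" where
  "rig_edges n F = {(u, v). u \<in> {..<n} \<and> v \<in> {..<n} \<and> u \<noteq> v \<and> F u \<inter> F v \<noteq> {}}"

definition rig_connected :: "nat \<Rightarrow> (nat \<Rightarrow> nat set) \<Rightarrow> bool" where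
  "rig_connected n F \<longleftrightarrow> (\<forall>u\<in>{..<n}. \<forall>v\<in>{..<n}. (u, v) \<in> (rig_edges n F)\<^sup>*)"

definition rig_prob :: "nat \<Rightarrow> nat \<Rightarrow> nat \<Rightarrow> ((nat \<Rightarrow> nat set) \<Rightarrow> bool) \<Rightarrow> real" where
  "rig_prob n m k P = real (card {F \<in> rig_space n m k. P F}) / real (card (rig_space n m k))"

end

theory Submission
  imports Defs "HOL-Real_Asymp.Real_Asymp"
begin


definition KS :: "nat \<Rightarrow> nat \<Rightarrow> nat set set" where
  "KS m k = {S. S \<subseteq> {..<m} \<and> card S = k}"

lemma finite_KS[simp]: "finite (KS m k)"
  unfolding KS_def by (rule finite_subset[of _ "Pow {..<m}"]) auto

lemma card_KS: "card (KS m k) = m choose k"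
  unfolding KS_def using n_subsets[of "{..<m}" k] by simp

lemma rig_space_KS: "rig_space n m k = PiE {..<n} (\<lambda>_. KS m k)"
  unfolding rig_space_def KS_def by simp

lemma card_rig_space: "card (rig_space n m k) = (m choose k) ^ n"
  unfolding rig_space_KS by (simp add: card_PiE card_KS)

lemma card_split_fiber:
  fixes I J :: "'a set" and A :: "'b set"
  assumes "finite I" "J \<subseteq> I" "g \<in> PiE J (\<lambda>_. A)" "B \<subseteq> A"
  shows "card {F \<in> PiE I (\<lambda>_. A). restrict F J = g \<and> (\<forall>v\<in>I-J. F v \<in> B)} = card B ^ card (I - J)"
proof -
  let ?X = "{F \<in> PiE I (\<lambda>_. A). restrict F J = g \<and> (\<forall>v\<in>I-J. F v \<in> B)}"
  have "bij_betw (\<lambda>F. restrict F (I - J)) ?X (PiE (I - J) (\<lambda>_. B))"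
  proof (rule bij_betw_byWitness[where f' = "\<lambda>h v. if v \<in> J then g v else h v"])
    show "\<forall>a\<in>?X. (\<lambda>v. if v \<in> J then g v else restrict a (I - J) v) = a"
    proof
      fix F assume F: "F \<in> ?X"
      show "(\<lambda>v. if v \<in> J then g v else restrict F (I - J) v) = F"
      proof
        fix v show "(if v \<in> J then g v else restrict F (I - J) v) = F v"
          using F assms(2) by (auto simp: restrict_def PiE_def extensional_def fun_eq_iff split: if_splits)
      qed
    qed
    show "\<forall>a'\<in>PiE (I - J) (\<lambda>_. B). restrict (\<lambda>v. if v \<in> J then g v else a' v) (I - J) = a'"
      by (auto simp: restrict_def PiE_def extensional_def fun_eq_iff)
    show "(\<lambda>F. restrict F (I - J)) ` ?X \<subseteq> PiE (I - J) (\<lambda>_. B)"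
      by auto
    show "(\<lambda>h v. if v \<in> J then g v else h v) ` PiE (I - J) (\<lambda>_. B) \<subseteq> ?X"
      using assms by (auto simp: restrict_def PiE_def extensional_def fun_eq_iff Pi_def subset_iff)
  qed
  then have "card ?X = card (PiE (I - J) (\<lambda>_. B))" by (rule bij_betw_same_card)
  also have "\<dots> = card B ^ card (I - J)"
    using assms(1) by (simp add: card_PiE)
  finally show ?thesis .
qed

lemma card_split:
  fixes I J :: "'a set" and A :: "'b set"
  assumes "finite I" "J \<subseteq> I" "finite A" "G \<subseteq> PiE J (\<lambda>_. A)" "\<And>g. g \<in> G \<Longrightarrow> B g \<subseteq> A"
  shows "card {F \<in> PiE I (\<lambda>_. A). restrict F J \<in> G \<and> (\<forall>v\<in>I-J. F v \<in> B (restrict F J))}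
       = (\<Sum>g\<in>G. card (B g) ^ card (I - J))"
proof -
  have fG: "finite G"
    using assms by (metis finite_PiE finite_subset rev_finite_subset assms(1) finite_subset[OF assms(2)])
  have eq: "{F \<in> PiE I (\<lambda>_. A). restrict F J \<in> G \<and> (\<forall>v\<in>I-J. F v \<in> B (restrict F J))}
      = (\<Union>g\<in>G. {F \<in> PiE I (\<lambda>_. A). restrict F J = g \<and> (\<forall>v\<in>I-J. F v \<in> B g)})"
    by auto
  have "card (\<Union>g\<in>G. {F \<in> PiE I (\<lambda>_. A). restrict F J = g \<and> (\<forall>v\<in>I-J. F v \<in> B g)})
      = (\<Sum>g\<in>G. card {F \<in> PiE I (\<lambda>_. A). restrict F J = g \<and> (\<forall>v\<in>I-J. F v \<in> B g)})"
    by (rule card_UN_disjoint) (use fG assms(1,3) in \<open>auto intro: finite_subset[OF _ finite_PiE[of I "\<lambda>_. A"]]\<close>)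
  also have "\<dots> = (\<Sum>g\<in>G. card (B g) ^ card (I - J))"
    using assms by (intro sum.cong refl card_split_fiber) auto
  finally show ?thesis using eq by simp
qed

lemma card_avoid:
  assumes "U \<subseteq> {..<m}"
  shows "card {X \<in> KS m k. X \<inter> U = {}} = (m - card U) choose k"
proof -
  have fU: "finite U" using assms finite_subset by blast
  have "{X \<in> KS m k. X \<inter> U = {}} = {X. X \<subseteq> {..<m} - U \<and> card X = k}"
    unfolding KS_def by auto
  moreover have "card ({..<m} - U) = m - card U"
    using assms fU by (simp add: card_Diff_subset)
  ultimately show ?thesis using n_subsets[of "{..<m} - U" k] by simp
qed

lemma card_inside:
  assumes "A \<subseteq> {..<m}"
  shows "card {X \<in> KS m k. X \<subseteq> A} = card A choose k"
proof -
  have "{X \<in> KS m k. X \<subseteq> A} = {X. X \<subseteq> A \<and> card X = k}"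
    unfolding KS_def using assms by auto
  then show ?thesis using n_subsets[of A k] assms finite_subset by fastforce
qed

lemma cnt_inside:
  assumes "S \<subseteq> {..<n}" "A \<subseteq> {..<m}"
  shows "card {F \<in> rig_space n m k. \<forall>v\<in>S. F v \<subseteq> A}
         = (card A choose k) ^ card S * (m choose k) ^ (n - card S)"
proof -
  let ?J = "{..<n} - S"
  have eq: "{F \<in> rig_space n m k. \<forall>v\<in>S. F v \<subseteq> A}
    = {F \<in> PiE {..<n} (\<lambda>_. KS m k). restrict F ?J \<in> PiE ?J (\<lambda>_. KS m k)
         \<and> (\<forall>v\<in>{..<n}-?J. F v \<in> (\<lambda>g. {X \<in> KS m k. X \<subseteq> A}) (restrict F ?J))}"
    using assms unfolding rig_space_KS by (auto simp: PiE_iff)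
  have "card {F \<in> PiE {..<n} (\<lambda>_. KS m k). restrict F ?J \<in> PiE ?J (\<lambda>_. KS m k)
         \<and> (\<forall>v\<in>{..<n}-?J. F v \<in> (\<lambda>g. {X \<in> KS m k. X \<subseteq> A}) (restrict F ?J))}
     = (\<Sum>g\<in>PiE ?J (\<lambda>_. KS m k). card {X \<in> KS m k. X \<subseteq> A} ^ card ({..<n} - ?J))"
    by (rule card_split) auto
  also have "\<dots> = (m choose k) ^ (n - card S) * (card A choose k) ^ card S"
  proof -
    have "{..<n} - ?J = S" using assms by auto
    moreover have "card ?J = n - card S"
      using assms by (simp add: card_Diff_subset finite_subset)
    ultimately show ?thesis
      by (simp add: card_inside[OF assms(2)] card_PiE card_KS)
  qed
  finally show ?thesis using eq by (simp add: mult.commute)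
qed

lemma cnt_cut_big:
  assumes "S \<subseteq> {..<n}"
  shows "card {F \<in> rig_space n m k. t \<le> card (\<Union>(F ` S)) \<and> (\<forall>u\<in>S. \<forall>v\<in>{..<n}-S. F u \<inter> F v = {})}
         \<le> (m choose k) ^ card S * ((m - t) choose k) ^ (n - card S)"
proof -
  let ?G = "{g \<in> PiE S (\<lambda>_. KS m k). t \<le> card (\<Union>(g ` S))}"
  let ?B = "\<lambda>g. {X \<in> KS m k. X \<inter> \<Union>(g ` S) = {}}"
  have sub: "{F \<in> rig_space n m k. t \<le> card (\<Union>(F ` S)) \<and> (\<forall>u\<in>S. \<forall>v\<in>{..<n}-S. F u \<inter> F v = {})}
    \<subseteq> {F \<in> PiE {..<n} (\<lambda>_. KS m k). restrict F S \<in> ?G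
         \<and> (\<forall>v\<in>{..<n}-S. F v \<in> ?B (restrict F S))}"
  proof
    fix F assume F: "F \<in> {F \<in> rig_space n m k. t \<le> card (\<Union>(F ` S)) \<and> (\<forall>u\<in>S. \<forall>v\<in>{..<n}-S. F u \<inter> F v = {})}"
    have im: "restrict F S ` S = F ` S" by auto
    show "F \<in> {F \<in> PiE {..<n} (\<lambda>_. KS m k). restrict F S \<in> ?G
         \<and> (\<forall>v\<in>{..<n}-S. F v \<in> ?B (restrict F S))}"
      using F assms unfolding rig_space_KS im by (simp add: PiE_iff, blast)
  qed
  have fin: "finite (PiE {..<n} (\<lambda>_. KS m k))" by (simp add: finite_PiE)
  have "card {F \<in> rig_space n m k. t \<le> card (\<Union>(F ` S)) \<and> (\<forall>u\<in>S. \<forall>v\<in>{..<n}-S. F u \<inter> F v = {})}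
     \<le> card {F \<in> PiE {..<n} (\<lambda>_. KS m k). restrict F S \<in> ?G
         \<and> (\<forall>v\<in>{..<n}-S. F v \<in> ?B (restrict F S))}"
    by (rule card_mono[OF finite_subset[OF _ fin] sub]) auto
  also have "\<dots> = (\<Sum>g\<in>?G. card (?B g) ^ card ({..<n} - S))"
    using assms by (intro card_split) auto
  also have "\<dots> \<le> (\<Sum>g\<in>?G. ((m - t) choose k) ^ (n - card S))"
  proof (rule sum_mono)
    fix g assume g: "g \<in> ?G"
    have U: "\<Union>(g ` S) \<subseteq> {..<m}" using g unfolding KS_def by (auto simp: PiE_iff)
    have "card (?B g) = (m - card (\<Union>(g ` S))) choose k" by (rule card_avoid[OF U])
    also have "\<dots> \<le> (m - t) choose k" using g by (intro binomial_right_mono) auto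
    finally show "card (?B g) ^ card ({..<n} - S) \<le> ((m - t) choose k) ^ (n - card S)"
      using assms by (simp add: card_Diff_subset finite_subset power_mono)
  qed
  also have "\<dots> = card ?G * ((m - t) choose k) ^ (n - card S)" by simp
  also have "\<dots> \<le> (m choose k) ^ card S * ((m - t) choose k) ^ (n - card S)"
  proof -
    have "card ?G \<le> card (PiE S (\<lambda>_. KS m k))"
      using assms by (intro card_mono) (auto simp: finite_PiE finite_subset)
    also have "\<dots> = (m choose k) ^ card S"
      using assms by (simp add: card_PiE card_KS finite_subset)
    finally show ?thesis by (simp add: mult_right_mono)
  qed
  finally show ?thesis .
qed

lemma exists_superset_card:
  assumes "U \<subseteq> {..<m}" "card U \<le> t" "t \<le> m"
  obtains A where "U \<subseteq> A" "A \<subseteq> {..<m}" "card A = t"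
proof -
  have fU: "finite U" using assms finite_subset by blast
  have "t - card U \<le> card ({..<m} - U)" using assms fU by (simp add: card_Diff_subset)
  then obtain B where B: "B \<subseteq> {..<m} - U" "card B = t - card U"
    by (meson obtain_subset_with_card_n)
  have fB: "finite B" using B(1) finite_subset by blast
  have "card (U \<union> B) = t" using B fU fB assms(2) by (subst card_Un_disjoint) auto
  then show ?thesis using that[of "U \<union> B"] B assms by auto
qed

definition cutev :: "nat \<Rightarrow> nat set \<Rightarrow> (nat \<Rightarrow> nat set) \<Rightarrow> bool" where
  "cutev n S F \<longleftrightarrow> (\<forall>u\<in>S. \<forall>v\<in>{..<n}-S. F u \<inter> F v = {})"

lemma cnt_cut:
  assumes "S \<subseteq> {..<n}" "t \<le> m"
  shows "card {F \<in> rig_space n m k. cutev n S F}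
         \<le> (m choose t) * ((t choose k) ^ card S * (m choose k) ^ (n - card S))
           + (m choose k) ^ card S * ((m - t) choose k) ^ (n - card S)"
proof -
  let ?Om = "rig_space n m k"
  let ?As = "{A. A \<subseteq> {..<m} \<and> card A = t}"
  have fin: "finite ?Om" unfolding rig_space_KS by (simp add: finite_PiE)
  have finAs: "finite ?As" by (rule finite_subset[of _ "Pow {..<m}"]) auto
  have sub: "{F \<in> ?Om. cutev n S F} \<subseteq>
      (\<Union>A\<in>?As. {F \<in> ?Om. \<forall>v\<in>S. F v \<subseteq> A})
      \<union> {F \<in> ?Om. t \<le> card (\<Union>(F ` S)) \<and> (\<forall>u\<in>S. \<forall>v\<in>{..<n}-S. F u \<inter> F v = {})}"
  proof
    fix F assume F: "F \<in> {F \<in> ?Om. cutev n S F}"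
    show "F \<in> (\<Union>A\<in>?As. {F \<in> ?Om. \<forall>v\<in>S. F v \<subseteq> A})
      \<union> {F \<in> ?Om. t \<le> card (\<Union>(F ` S)) \<and> (\<forall>u\<in>S. \<forall>v\<in>{..<n}-S. F u \<inter> F v = {})}"
    proof (cases "t \<le> card (\<Union>(F ` S))")
      case True then show ?thesis using F unfolding cutev_def by auto
    next
      case False
      have U: "\<Union>(F ` S) \<subseteq> {..<m}" using F assms unfolding rig_space_KS KS_def by (auto simp: PiE_iff)
      obtain A where A: "\<Union>(F ` S) \<subseteq> A" "A \<subseteq> {..<m}" "card A = t"
        using exists_superset_card[OF U _ assms(2)] False by auto
      then have "A \<in> ?As" "\<forall>v\<in>S. F v \<subseteq> A" by auto
      then show ?thesis using F by blast
    qed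
  qed
  have "card {F \<in> ?Om. cutev n S F} \<le> card ((\<Union>A\<in>?As. {F \<in> ?Om. \<forall>v\<in>S. F v \<subseteq> A})
      \<union> {F \<in> ?Om. t \<le> card (\<Union>(F ` S)) \<and> (\<forall>u\<in>S. \<forall>v\<in>{..<n}-S. F u \<inter> F v = {})})"
    by (rule card_mono[OF _ sub]) (use fin in auto)
  also have "\<dots> \<le> card (\<Union>A\<in>?As. {F \<in> ?Om. \<forall>v\<in>S. F v \<subseteq> A})
      + card {F \<in> ?Om. t \<le> card (\<Union>(F ` S)) \<and> (\<forall>u\<in>S. \<forall>v\<in>{..<n}-S. F u \<inter> F v = {})}"
    by (rule card_Un_le)
  also have "card (\<Union>A\<in>?As. {F \<in> ?Om. \<forall>v\<in>S. F v \<subseteq> A})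
      \<le> (\<Sum>A\<in>?As. card {F \<in> ?Om. \<forall>v\<in>S. F v \<subseteq> A})"
    by (rule card_UN_le[OF finAs])
  also have "\<dots> = (\<Sum>A\<in>?As. (t choose k) ^ card S * (m choose k) ^ (n - card S))"
    by (rule sum.cong) (use assms in \<open>auto simp: cnt_inside\<close>)
  also have "\<dots> = (m choose t) * ((t choose k) ^ card S * (m choose k) ^ (n - card S))"
    using n_subsets[of "{..<m}" t] by simp
  finally show ?thesis using cnt_cut_big[OF assms(1), of m k t] by linarith
qed


lemma disc_cut:
  assumes "\<not> rig_connected n F"
  shows "\<exists>S. S \<subseteq> {..<n} \<and> S \<noteq> {} \<and> 2 * card S \<le> n \<and> cutev n S F"
proof -
  obtain u v where uv: "u \<in> {..<n}" "v \<in> {..<n}" "(u, v) \<notin> (rig_edges n F)\<^sup>*"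
    using assms unfolding rig_connected_def by blast
  define C where "C = {w \<in> {..<n}. (u, w) \<in> (rig_edges n F)\<^sup>*}"
  have uC: "u \<in> C" using uv unfolding C_def by auto
  have vC: "v \<notin> C" using uv unfolding C_def by auto
  have CV: "C \<subseteq> {..<n}" unfolding C_def by auto
  have cutC: "cutev n C F"
    unfolding cutev_def
  proof (intro ballI)
    fix w x assume w: "w \<in> C" and x: "x \<in> {..<n} - C"
    show "F w \<inter> F x = {}"
    proof (rule ccontr)
      assume ne: "F w \<inter> F x \<noteq> {}"
      have "w \<noteq> x" using w x by auto
      then have "(w, x) \<in> rig_edges n F" using ne w x CV unfolding rig_edges_def by auto
      then have "(u, x) \<in> (rig_edges n F)\<^sup>*" using w unfolding C_def
        by (auto intro: rtrancl_into_rtrancl)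
      then show False using x unfolding C_def by auto
    qed
  qed
  have cutD: "cutev n ({..<n} - C) F"
    unfolding cutev_def
  proof (intro ballI)
    fix x w assume x: "x \<in> {..<n} - C" and w: "w \<in> {..<n} - ({..<n} - C)"
    have "w \<in> C" using w by blast
    then have "F w \<inter> F x = {}" using cutC x unfolding cutev_def by blast
    then show "F x \<inter> F w = {}" by blast
  qed
  have fC: "finite C" using CV finite_subset by blast
  show ?thesis
  proof (cases "2 * card C \<le> n")
    case True then show ?thesis using uC CV cutC by (intro exI[of _ C]) auto
  next
    case False
    have "card ({..<n} - C) = n - card C" using CV fC by (simp add: card_Diff_subset)
    then have "2 * card ({..<n} - C) \<le> n" using False by linarith
    moreover have "{..<n} - C \<noteq> {}" using vC uv by auto
    ultimately show ?thesis using cutD by (intro exI[of _ "{..<n} - C"]) auto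
  qed
qed

lemma card_disc_le:
  "card {F \<in> rig_space n m k. \<not> rig_connected n F}
   \<le> (\<Sum>s\<in>{1..n div 2}. \<Sum>S\<in>{S. S \<subseteq> {..<n} \<and> card S = s}. card {F \<in> rig_space n m k. cutev n S F})"
proof -
  let ?Om = "rig_space n m k"
  have fin: "finite ?Om" unfolding rig_space_KS by (simp add: finite_PiE)
  have finS: "\<And>s. finite {S. S \<subseteq> {..<n} \<and> card S = s}"
    by (rule finite_subset[of _ "Pow {..<n}"]) auto
  have sub: "{F \<in> ?Om. \<not> rig_connected n F}
      \<subseteq> (\<Union>s\<in>{1..n div 2}. \<Union>S\<in>{S. S \<subseteq> {..<n} \<and> card S = s}. {F \<in> ?Om. cutev n S F})"
  proof
    fix F assume F: "F \<in> {F \<in> ?Om. \<not> rig_connected n F}"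
    then obtain S where S: "S \<subseteq> {..<n}" "S \<noteq> {}" "2 * card S \<le> n" "cutev n S F"
      using disc_cut by blast
    have "card S \<ge> 1" using S(1,2) finite_subset[OF S(1)] by (simp add: Suc_le_eq card_gt_0_iff)
    then have "card S \<in> {1..n div 2}" using S(3) by auto
    then show "F \<in> (\<Union>s\<in>{1..n div 2}. \<Union>S\<in>{S. S \<subseteq> {..<n} \<and> card S = s}. {F \<in> ?Om. cutev n S F})"
      using S F by (intro UN_I[of "card S"] UN_I[of S]) auto
  qed
  have "card {F \<in> ?Om. \<not> rig_connected n F}
      \<le> card (\<Union>s\<in>{1..n div 2}. \<Union>S\<in>{S. S \<subseteq> {..<n} \<and> card S = s}. {F \<in> ?Om. cutev n S F})"
    by (rule card_mono[OF _ sub]) (use fin in auto)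
  also have "\<dots> \<le> (\<Sum>s\<in>{1..n div 2}. card (\<Union>S\<in>{S. S \<subseteq> {..<n} \<and> card S = s}. {F \<in> ?Om. cutev n S F}))"
    by (rule card_UN_le) simp
  also have "\<dots> \<le> (\<Sum>s\<in>{1..n div 2}. \<Sum>S\<in>{S. S \<subseteq> {..<n} \<and> card S = s}. card {F \<in> ?Om. cutev n S F})"
    by (intro sum_mono card_UN_le finS)
  finally show ?thesis .
qed


lemma prob_disc_le:
  fixes t :: "nat \<Rightarrow> nat"
  assumes tm: "\<And>s. t s \<le> m" and km: "k \<le> m"
  shows "rig_prob n m k (\<lambda>F. \<not> rig_connected n F)
     \<le> (\<Sum>s\<in>{1..n div 2}. real (n choose s) *
          (real (m choose t s) * (real (t s choose k) / real (m choose k)) ^ s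
           + (real ((m - t s) choose k) / real (m choose k)) ^ (n - s)))"
proof -
  let ?C = "real (m choose k)"
  have Cpos: "?C > 0" using km by simp
  let ?b = "\<lambda>s. (m choose t s) * ((t s choose k) ^ s * (m choose k) ^ (n - s))
           + (m choose k) ^ s * ((m - t s) choose k) ^ (n - s)"
  have "card {F \<in> rig_space n m k. \<not> rig_connected n F}
     \<le> (\<Sum>s\<in>{1..n div 2}. \<Sum>S\<in>{S. S \<subseteq> {..<n} \<and> card S = s}. card {F \<in> rig_space n m k. cutev n S F})"
    by (rule card_disc_le)
  also have "\<dots> \<le> (\<Sum>s\<in>{1..n div 2}. \<Sum>S\<in>{S. S \<subseteq> {..<n} \<and> card S = s}. ?b s)"
  proof (intro sum_mono)
    fix s S assume "S \<in> {S. S \<subseteq> {..<n} \<and> card S = s}"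
    then show "card {F \<in> rig_space n m k. cutev n S F} \<le> ?b s"
      using cnt_cut[of S n "t s" m k] tm by simp
  qed
  also have "\<dots> = (\<Sum>s\<in>{1..n div 2}. (n choose s) * ?b s)"
    using n_subsets[of "{..<n}"] by simp
  finally have le0: "card {F \<in> rig_space n m k. \<not> rig_connected n F} \<le> (\<Sum>s\<in>{1..n div 2}. (n choose s) * ?b s)" .
  have le: "real (card {F \<in> rig_space n m k. \<not> rig_connected n F})
      \<le> (\<Sum>s\<in>{1..n div 2}. real (n choose s) * real (?b s))"
    using of_nat_mono[OF le0, where 'a=real] by (simp only: of_nat_sum of_nat_mult)
  have "rig_prob n m k (\<lambda>F. \<not> rig_connected n F)
       = real (card {F \<in> rig_space n m k. \<not> rig_connected n F}) / ?C ^ n"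
    unfolding rig_prob_def card_rig_space by simp
  also have "\<dots> \<le> (\<Sum>s\<in>{1..n div 2}. real (n choose s) * real (?b s)) / ?C ^ n"
    using le Cpos by (simp add: divide_right_mono)
  also have "\<dots> = (\<Sum>s\<in>{1..n div 2}. real (n choose s) * (real (?b s) / ?C ^ n))"
    by (simp add: sum_divide_distrib)
  also have "\<dots> = (\<Sum>s\<in>{1..n div 2}. real (n choose s) *
          (real (m choose t s) * (real (t s choose k) / real (m choose k)) ^ s
           + (real ((m - t s) choose k) / real (m choose k)) ^ (n - s)))"
  proof (rule sum.cong[OF refl])
    fix s assume s: "s \<in> {1..n div 2}"
    then have sn: "n = s + (n - s)" by auto
    have pw: "?C ^ n = ?C ^ s * ?C ^ (n - s)" by (subst sn) (simp add: power_add)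
    have "real (?b s) / ?C ^ n = real (m choose t s) * (real (t s choose k) / ?C) ^ s
           + (real ((m - t s) choose k) / ?C) ^ (n - s)"
      unfolding pw using Cpos by (simp add: power_divide divide_simps)
    then show "real (n choose s) * (real (?b s) / ?C ^ n) = real (n choose s) *
          (real (m choose t s) * (real (t s choose k) / real (m choose k)) ^ s
           + (real ((m - t s) choose k) / real (m choose k)) ^ (n - s))" by simp
  qed
  finally show ?thesis .
qed


definition isol :: "nat \<Rightarrow> (nat \<Rightarrow> nat set) \<Rightarrow> nat \<Rightarrow> bool" where
  "isol n F u \<longleftrightarrow> (\<forall>v\<in>{..<n}-{u}. F u \<inter> F v = {})"

lemma card_avoid':
  assumes "U \<subseteq> {..<m}"
  shows "card {X \<in> KS m k. U \<inter> X = {}} = (m - card U) choose k"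
  using card_avoid[OF assms, of k] by (simp add: Int_commute)

lemma cnt_iso1:
  assumes "u < n"
  shows "card {F \<in> rig_space n m k. isol n F u} = (m choose k) * ((m - k) choose k) ^ (n - 1)"
proof -
  let ?B = "\<lambda>g. {X \<in> KS m k. g u \<inter> X = {}}"
  have eq: "{F \<in> rig_space n m k. isol n F u}
    = {F \<in> PiE {..<n} (\<lambda>_. KS m k). restrict F {u} \<in> PiE {u} (\<lambda>_. KS m k)
         \<and> (\<forall>v\<in>{..<n}-{u}. F v \<in> ?B (restrict F {u}))}"
    using assms unfolding rig_space_KS isol_def by (auto simp: PiE_iff)
  have "card {F \<in> PiE {..<n} (\<lambda>_. KS m k). restrict F {u} \<in> PiE {u} (\<lambda>_. KS m k)
         \<and> (\<forall>v\<in>{..<n}-{u}. F v \<in> ?B (restrict F {u}))}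
     = (\<Sum>g\<in>PiE {u} (\<lambda>_. KS m k). card (?B g) ^ card ({..<n} - {u}))"
    using assms by (intro card_split) auto
  also have "\<dots> = (\<Sum>g\<in>PiE {u} (\<lambda>_. KS m k). ((m - k) choose k) ^ (n - 1))"
  proof (rule sum.cong[OF refl])
    fix g assume g: "g \<in> PiE {u} (\<lambda>_. KS m k)"
    then have gu: "g u \<subseteq> {..<m}" "card (g u) = k" unfolding KS_def by auto
    show "card (?B g) ^ card ({..<n} - {u}) = ((m - k) choose k) ^ (n - 1)"
      using card_avoid'[OF gu(1), of k] gu(2) assms by simp
  qed
  also have "\<dots> = (m choose k) * ((m - k) choose k) ^ (n - 1)"
    by (simp add: card_PiE card_KS)
  finally show ?thesis using eq by simp
qed

lemma cnt_pair:
  assumes "u \<noteq> v"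
  shows "card {g \<in> PiE {u, v} (\<lambda>_. KS m k). g u \<inter> g v = {}} = (m choose k) * ((m - k) choose k)"
proof -
  let ?B = "\<lambda>g. {X \<in> KS m k. g u \<inter> X = {}}"
  have eq: "{g \<in> PiE {u, v} (\<lambda>_. KS m k). g u \<inter> g v = {}}
    = {F \<in> PiE {u, v} (\<lambda>_. KS m k). restrict F {u} \<in> PiE {u} (\<lambda>_. KS m k)
         \<and> (\<forall>w\<in>{u, v}-{u}. F w \<in> ?B (restrict F {u}))}"
    using assms by (auto simp: PiE_iff)
  have "card {F \<in> PiE {u, v} (\<lambda>_. KS m k). restrict F {u} \<in> PiE {u} (\<lambda>_. KS m k)
         \<and> (\<forall>w\<in>{u, v}-{u}. F w \<in> ?B (restrict F {u}))}
     = (\<Sum>g\<in>PiE {u} (\<lambda>_. KS m k). card (?B g) ^ card ({u, v} - {u}))"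
    by (intro card_split) auto
  also have "\<dots> = (\<Sum>g\<in>PiE {u} (\<lambda>_. KS m k). ((m - k) choose k))"
  proof (rule sum.cong[OF refl])
    fix g assume g: "g \<in> PiE {u} (\<lambda>_. KS m k)"
    then have gu: "g u \<subseteq> {..<m}" "card (g u) = k" unfolding KS_def by auto
    have "card ({u, v} - {u}) = 1" using assms by auto
    then show "card (?B g) ^ card ({u, v} - {u}) = ((m - k) choose k)"
      using card_avoid'[OF gu(1), of k] gu(2) by simp
  qed
  also have "\<dots> = (m choose k) * ((m - k) choose k)"
    by (simp add: card_PiE card_KS)
  finally show ?thesis using eq by simp
qed

lemma cnt_iso2:
  assumes "u < n" "v < n" "u \<noteq> v"
  shows "card {F \<in> rig_space n m k. isol n F u \<and> isol n F v}
     \<le> (m choose k) * ((m - k) choose k) * ((m - 2 * k) choose k) ^ (n - 2)"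
proof -
  let ?G = "{g \<in> PiE {u, v} (\<lambda>_. KS m k). g u \<inter> g v = {}}"
  let ?B = "\<lambda>g. {X \<in> KS m k. (g u \<union> g v) \<inter> X = {}}"
  have fin: "finite (PiE {..<n} (\<lambda>_. KS m k))" by (simp add: finite_PiE)
  have sub: "{F \<in> rig_space n m k. isol n F u \<and> isol n F v}
    \<subseteq> {F \<in> PiE {..<n} (\<lambda>_. KS m k). restrict F {u, v} \<in> ?G
         \<and> (\<forall>w\<in>{..<n}-{u, v}. F w \<in> ?B (restrict F {u, v}))}"
    using assms unfolding rig_space_KS isol_def by (auto simp: PiE_iff)
  have "card {F \<in> rig_space n m k. isol n F u \<and> isol n F v}
     \<le> card {F \<in> PiE {..<n} (\<lambda>_. KS m k). restrict F {u, v} \<in> ?G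
         \<and> (\<forall>w\<in>{..<n}-{u, v}. F w \<in> ?B (restrict F {u, v}))}"
    by (rule card_mono[OF finite_subset[OF _ fin] sub]) auto
  also have "\<dots> = (\<Sum>g\<in>?G. card (?B g) ^ card ({..<n} - {u, v}))"
    using assms by (intro card_split) auto
  also have "\<dots> = (\<Sum>g\<in>?G. ((m - 2 * k) choose k) ^ (n - 2))"
  proof (rule sum.cong[OF refl])
    fix g assume g: "g \<in> ?G"
    then have gu: "g u \<subseteq> {..<m}" "card (g u) = k" "g v \<subseteq> {..<m}" "card (g v) = k" "g u \<inter> g v = {}"
      unfolding KS_def by auto
    have fu: "finite (g u)" "finite (g v)" using gu finite_subset by blast+
    have cU: "card (g u \<union> g v) = 2 * k" using gu fu by (simp add: card_Un_disjoint)
    have U: "g u \<union> g v \<subseteq> {..<m}" using gu by auto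
    have "card ({..<n} - {u, v}) = n - 2" using assms by (simp add: card_Diff_subset)
    then show "card (?B g) ^ card ({..<n} - {u, v}) = ((m - 2 * k) choose k) ^ (n - 2)"
      using card_avoid'[OF U, of k] cU by simp
  qed
  also have "\<dots> = (m choose k) * ((m - k) choose k) * ((m - 2 * k) choose k) ^ (n - 2)"
    using cnt_pair[OF assms(3), of m k] by simp
  finally show ?thesis .
qed


lemma isol_notconn:
  assumes "2 \<le> n" "u < n" "isol n F u"
  shows "\<not> rig_connected n F"
proof
  assume c: "rig_connected n F"
  define v where "v = (if u = 0 then 1 else 0::nat)"
  have v: "v < n" "v \<noteq> u" using assms unfolding v_def by auto
  have "(u, v) \<in> (rig_edges n F)\<^sup>*" using c v assms unfolding rig_connected_def by auto
  then show False
  proof (cases rule: converse_rtranclE)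
    case base then show False using v by simp
  next
    case (step y)
    then have "y < n" "y \<noteq> u" "F u \<inter> F y \<noteq> {}" unfolding rig_edges_def by auto
    then show False using assms(3) unfolding isol_def by auto
  qed
qed

definition nIso :: "nat \<Rightarrow> (nat \<Rightarrow> nat set) \<Rightarrow> real" where
  "nIso n F = (\<Sum>u\<in>{..<n}. of_bool (isol n F u))"

lemma sum_bool_card: "finite A \<Longrightarrow> (\<Sum>x\<in>A. of_bool (P x) :: real) = real (card {x\<in>A. P x})"
  by (simp add: Int_def)

lemma sum_nIso:
  "(\<Sum>F\<in>rig_space n m k. nIso n F) = real n * real (m choose k) * real ((m - k) choose k) ^ (n - 1)"
proof -
  have fin: "finite (rig_space n m k)" unfolding rig_space_KS by (simp add: finite_PiE)
  have "(\<Sum>F\<in>rig_space n m k. nIso n F) = (\<Sum>u\<in>{..<n}. \<Sum>F\<in>rig_space n m k. of_bool (isol n F u))"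
    unfolding nIso_def by (rule sum.swap)
  also have "\<dots> = (\<Sum>u\<in>{..<n}. real (card {F \<in> rig_space n m k. isol n F u}))"
    using fin by (intro sum.cong refl sum_bool_card)
  also have "\<dots> = (\<Sum>u\<in>{..<n}. real (m choose k) * real ((m - k) choose k) ^ (n - 1))"
    by (intro sum.cong refl) (simp add: cnt_iso1)
  finally show ?thesis by simp
qed

lemma sum_nIso2:
  "(\<Sum>F\<in>rig_space n m k. (nIso n F)\<^sup>2)
    \<le> real n * real (m choose k) * real ((m - k) choose k) ^ (n - 1)
      + real n * (real n - 1) * (real (m choose k) * real ((m - k) choose k) * real ((m - 2 * k) choose k) ^ (n - 2))"
proof -
  let ?Om = "rig_space n m k"
  let ?c1 = "real (m choose k) * real ((m - k) choose k) ^ (n - 1)"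
  let ?c2 = "real (m choose k) * real ((m - k) choose k) * real ((m - 2 * k) choose k) ^ (n - 2)"
  have fin: "finite ?Om" unfolding rig_space_KS by (simp add: finite_PiE)
  have sq: "\<And>F. (nIso n F)\<^sup>2 = (\<Sum>u\<in>{..<n}. \<Sum>v\<in>{..<n}. of_bool (isol n F u \<and> isol n F v))"
    unfolding nIso_def power2_eq_square sum_product by (simp add: of_bool_conj)
  have "(\<Sum>F\<in>?Om. (nIso n F)\<^sup>2) = (\<Sum>F\<in>?Om. \<Sum>u\<in>{..<n}. \<Sum>v\<in>{..<n}. of_bool (isol n F u \<and> isol n F v))"
    unfolding sq ..
  also have "\<dots> = (\<Sum>u\<in>{..<n}. \<Sum>F\<in>?Om. \<Sum>v\<in>{..<n}. of_bool (isol n F u \<and> isol n F v))"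
    by (rule sum.swap)
  also have "\<dots> = (\<Sum>u\<in>{..<n}. \<Sum>v\<in>{..<n}. \<Sum>F\<in>?Om. of_bool (isol n F u \<and> isol n F v))"
    by (intro sum.cong refl sum.swap)
  also have "\<dots> = (\<Sum>u\<in>{..<n}. \<Sum>v\<in>{..<n}. real (card {F \<in> ?Om. isol n F u \<and> isol n F v}))"
    using fin by (intro sum.cong refl sum_bool_card)
  also have "\<dots> \<le> (\<Sum>u\<in>{..<n}. ?c1 + (real n - 1) * ?c2)"
  proof (rule sum_mono)
    fix u assume u: "u \<in> {..<n}"
    have split: "(\<Sum>v\<in>{..<n}. real (card {F \<in> ?Om. isol n F u \<and> isol n F v}))
       = real (card {F \<in> ?Om. isol n F u \<and> isol n F u})
         + (\<Sum>v\<in>{..<n}-{u}. real (card {F \<in> ?Om. isol n F u \<and> isol n F v}))"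
      using u by (subst sum.remove[of _ u]) auto
    have a: "real (card {F \<in> ?Om. isol n F u \<and> isol n F u}) = ?c1"
      using cnt_iso1[of u n m k] u by simp
    have b: "(\<Sum>v\<in>{..<n}-{u}. real (card {F \<in> ?Om. isol n F u \<and> isol n F v}))
        \<le> (\<Sum>v\<in>{..<n}-{u}. ?c2)"
    proof (rule sum_mono)
      fix v assume v: "v \<in> {..<n}-{u}"
      have "card {F \<in> ?Om. isol n F u \<and> isol n F v}
          \<le> (m choose k) * ((m - k) choose k) * ((m - 2 * k) choose k) ^ (n - 2)"
        using u v by (intro cnt_iso2) auto
      then show "real (card {F \<in> ?Om. isol n F u \<and> isol n F v}) \<le> ?c2"
        by (simp only: of_nat_mult[symmetric] of_nat_power[symmetric] of_nat_le_iff)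
    qed
    have "(\<Sum>v\<in>{..<n}-{u}. ?c2) = (real n - 1) * ?c2"
      using u by (simp add: card_Diff_subset of_nat_diff)
    then show "(\<Sum>v\<in>{..<n}. real (card {F \<in> ?Om. isol n F u \<and> isol n F v})) \<le> ?c1 + (real n - 1) * ?c2"
      using split a b by linarith
  qed
  also have "\<dots> = real n * ?c1 + real n * (real n - 1) * ?c2" by (simp add: distrib_left mult.assoc)
  finally show ?thesis by (simp add: mult.assoc)
qed


lemma chebyshev_zero:
  fixes X :: "'a \<Rightarrow> real"
  assumes fin: "finite A" and N: "card A > 0" and mu: "(\<Sum>x\<in>A. X x) > 0"
  shows "real (card {x \<in> A. X x = 0}) / real (card A)
     \<le> ((\<Sum>x\<in>A. (X x)\<^sup>2) / real (card A) - ((\<Sum>x\<in>A. X x) / real (card A))\<^sup>2)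
        / ((\<Sum>x\<in>A. X x) / real (card A))\<^sup>2"
proof -
  define N where "N = real (card A)"
  define S1 where "S1 = (\<Sum>x\<in>A. X x)"
  define S2 where "S2 = (\<Sum>x\<in>A. (X x)\<^sup>2)"
  define \<mu> where "\<mu> = S1 / N"
  have Npos: "N > 0" using N unfolding N_def by simp
  have mupos: "\<mu> > 0" using mu Npos unfolding \<mu>_def S1_def by simp
  have e1: "(\<Sum>x\<in>A. (X x - \<mu>)\<^sup>2) = (\<Sum>x\<in>A. (X x)\<^sup>2 - (2 * \<mu>) * X x + \<mu>\<^sup>2)"
    by (intro sum.cong refl) (simp add: power2_diff)
  have "(\<Sum>x\<in>A. (X x - \<mu>)\<^sup>2) = S2 - 2 * \<mu> * S1 + N * \<mu>\<^sup>2"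
    unfolding e1 S1_def S2_def N_def
    by (simp only: sum.distrib sum_subtractf sum_distrib_left[symmetric] sum_constant of_nat_id)
  also have "\<dots> = S2 - N * \<mu>\<^sup>2" unfolding \<mu>_def using Npos by (simp add: power2_eq_square field_simps)
  finally have var: "(\<Sum>x\<in>A. (X x - \<mu>)\<^sup>2) = S2 - N * \<mu>\<^sup>2" .
  have "real (card {x \<in> A. X x = 0}) * \<mu>\<^sup>2 = (\<Sum>x\<in>{x \<in> A. X x = 0}. (X x - \<mu>)\<^sup>2)"
    by simp
  also have "\<dots> \<le> (\<Sum>x\<in>A. (X x - \<mu>)\<^sup>2)"
    by (rule sum_mono2[OF fin]) auto
  finally have "real (card {x \<in> A. X x = 0}) * \<mu>\<^sup>2 \<le> S2 - N * \<mu>\<^sup>2" using var by simp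
  then have "real (card {x \<in> A. X x = 0}) / N \<le> (S2 - N * \<mu>\<^sup>2) / (N * \<mu>\<^sup>2)"
    using Npos mupos by (simp add: field_simps)
  also have "\<dots> = (S2 / N - \<mu>\<^sup>2) / \<mu>\<^sup>2" using Npos mupos by (simp add: field_simps)
  finally show ?thesis unfolding N_def S1_def S2_def \<mu>_def .
qed



lemma prob_notconn_lower:
  assumes n2: "2 \<le> n" and km: "k \<le> m" and q1pos: "((m - k) choose k) > 0"
  defines "q1 \<equiv> real ((m - k) choose k) / real (m choose k)"
      and "q2 \<equiv> real ((m - 2 * k) choose k) / real (m choose k)"
  defines "\<mu> \<equiv> real n * q1 ^ (n - 1)"
  shows "rig_prob n m k (\<lambda>F. \<not> rig_connected n F)
     \<ge> 1 - ((\<mu> + real n * (real n - 1) * (q1 * q2 ^ (n - 2))) - \<mu>\<^sup>2) / \<mu>\<^sup>2"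
proof -
  let ?Om = "rig_space n m k"
  let ?C = "real (m choose k)"
  let ?N = "real (card ?Om)"
  have Cpos: "?C > 0" using km by simp
  have N: "?N = ?C ^ n" by (simp add: card_rig_space)
  have fin: "finite ?Om" unfolding rig_space_KS by (simp add: finite_PiE)
  have cardpos: "card ?Om > 0" using Cpos by (simp add: card_rig_space)
  have q1p: "q1 > 0" unfolding q1_def using q1pos Cpos by simp
  have q2nn: "q2 \<ge> 0" unfolding q2_def by simp
  have pn1: "?C ^ n = ?C * ?C ^ (n - 1)" using n2 by (metis power_eq_if not_numeral_le_zero le_zero_eq)
  have pn2: "?C ^ n = ?C * ?C * ?C ^ (n - 2)"
  proof -
    have "n = Suc (Suc (n - 2))" using n2 by simp
    then show ?thesis by (metis mult.assoc power_Suc)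
  qed
  have S1: "(\<Sum>F\<in>?Om. nIso n F) / ?N = \<mu>"
    unfolding sum_nIso N \<mu>_def q1_def pn1 using Cpos by (simp add: power_divide field_simps)
  have S1pos: "(\<Sum>F\<in>?Om. nIso n F) > 0"
  proof -
    have "\<mu> > 0" unfolding \<mu>_def using q1p n2 by simp
    moreover have "(\<Sum>F\<in>?Om. nIso n F) = \<mu> * ?N" using S1 cardpos by (simp add: field_simps)
    ultimately show ?thesis using cardpos by simp
  qed
  have S2: "(\<Sum>F\<in>?Om. (nIso n F)\<^sup>2) / ?N \<le> \<mu> + real n * (real n - 1) * (q1 * q2 ^ (n - 2))"
  proof -
    have "(\<Sum>F\<in>?Om. (nIso n F)\<^sup>2) / ?N
      \<le> (real n * ?C * real ((m - k) choose k) ^ (n - 1)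
      + real n * (real n - 1) * (?C * real ((m - k) choose k) * real ((m - 2 * k) choose k) ^ (n - 2))) / ?N"
      using sum_nIso2[of n m k] cardpos by (simp add: divide_right_mono)
    also have "\<dots> = real n * ?C * real ((m - k) choose k) ^ (n - 1) / ?C ^ n
      + real n * (real n - 1) * (?C * real ((m - k) choose k) * real ((m - 2 * k) choose k) ^ (n - 2)) / ?C ^ n"
      unfolding N by (simp add: add_divide_distrib)
    also have "real n * ?C * real ((m - k) choose k) ^ (n - 1) / ?C ^ n = \<mu>"
      unfolding \<mu>_def q1_def pn1 using Cpos by (simp add: power_divide field_simps)
    also have "real n * (real n - 1) * (?C * real ((m - k) choose k) * real ((m - 2 * k) choose k) ^ (n - 2)) / ?C ^ n
        = real n * (real n - 1) * (q1 * q2 ^ (n - 2))"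
      unfolding q1_def q2_def pn2 using Cpos by (simp add: power_divide field_simps)
    finally show ?thesis .
  qed
  have cheb: "real (card {F \<in> ?Om. nIso n F = 0}) / ?N \<le> (\<mu> + real n * (real n - 1) * (q1 * q2 ^ (n - 2)) - \<mu>\<^sup>2) / \<mu>\<^sup>2"
  proof -
    have "real (card {F \<in> ?Om. nIso n F = 0}) / ?N
      \<le> ((\<Sum>F\<in>?Om. (nIso n F)\<^sup>2) / ?N - ((\<Sum>F\<in>?Om. nIso n F) / ?N)\<^sup>2) / ((\<Sum>F\<in>?Om. nIso n F) / ?N)\<^sup>2"
      by (rule chebyshev_zero[OF fin cardpos S1pos])
    also have "\<dots> \<le> (\<mu> + real n * (real n - 1) * (q1 * q2 ^ (n - 2)) - \<mu>\<^sup>2) / \<mu>\<^sup>2"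
      unfolding S1 using S2 by (simp add: divide_right_mono)
    finally show ?thesis .
  qed
  have sub: "?Om - {F \<in> ?Om. nIso n F = 0} \<subseteq> {F \<in> ?Om. \<not> rig_connected n F}"
  proof
    fix F assume F: "F \<in> ?Om - {F \<in> ?Om. nIso n F = 0}"
    then have "nIso n F \<noteq> 0" by auto
    have "\<exists>u<n. isol n F u"
    proof (rule ccontr)
      assume "\<not> (\<exists>u<n. isol n F u)"
      then have "nIso n F = 0" unfolding nIso_def by simp
      then show False using \<open>nIso n F \<noteq> 0\<close> by simp
    qed
    then obtain u where "u < n" "isol n F u" by blast
    then show "F \<in> {F \<in> ?Om. \<not> rig_connected n F}" using F isol_notconn[OF n2] by auto
  qed
  have "card ?Om - card {F \<in> ?Om. nIso n F = 0} \<le> card {F \<in> ?Om. \<not> rig_connected n F}"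
    using card_mono[OF _ sub] fin card_Diff_subset[of "{F \<in> ?Om. nIso n F = 0}" ?Om] by fastforce
  then have "?N - real (card {F \<in> ?Om. nIso n F = 0}) \<le> real (card {F \<in> ?Om. \<not> rig_connected n F})"
    by (metis (no_types, lifting) card_mono diff_le_mono2 fin mem_Collect_eq of_nat_diff of_nat_le_iff subsetI order_trans)
  then have "1 - real (card {F \<in> ?Om. nIso n F = 0}) / ?N \<le> rig_prob n m k (\<lambda>F. \<not> rig_connected n F)"
  proof -
    have "1 - real (card {F \<in> ?Om. nIso n F = 0}) / ?N = (?N - real (card {F \<in> ?Om. nIso n F = 0})) / ?N"
      using cardpos by (simp add: diff_divide_distrib)
    also have "\<dots> \<le> real (card {F \<in> ?Om. \<not> rig_connected n F}) / ?N"
      using \<open>?N - real (card {F \<in> ?Om. nIso n F = 0}) \<le> _\<close> by (simp add: divide_right_mono)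
    finally show ?thesis unfolding rig_prob_def .
  qed
  then show ?thesis using cheb by linarith
qed


lemma binom_step: "Suc j * (a choose Suc j) = (a - j) * (a choose j)"
proof (cases a)
  case 0 then show ?thesis by simp
next
  case (Suc b)
  have "Suc j * (Suc b choose Suc j) = Suc b * (b choose j)" by (rule Suc_times_binomial)
  also have "\<dots> = (Suc b - j) * (Suc b choose j)" using binomial_absorb_comp[of "Suc b" j] by simp
  finally show ?thesis using Suc by simp
qed

lemma binom_step_real:
  "real (a choose Suc j) = real (a - j) * real (a choose j) / real (Suc j)"
proof -
  have "real (Suc j) * real (a choose Suc j) = real (a - j) * real (a choose j)"
    using binom_step[of j a] by (metis of_nat_mult)
  then show ?thesis by (simp add: field_simps)
qed

lemma binom_ratio_le:
  assumes "a \<le> m"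
  shows "real (a choose j) * real m ^ j \<le> real (m choose j) * real a ^ j"
proof (induction j)
  case 0 then show ?case by simp
next
  case (Suc j)
  show ?case
  proof (cases "j < a")
    case False
    then show ?thesis by (simp add: binomial_eq_0)
  next
    case True
    have ra: "real (a - j) = real a - real j" using True by simp
    have rm: "real (m - j) = real m - real j" using True assms by simp
    have key: "(real a - real j) * real m \<le> (real m - real j) * real a"
    proof -
      have "real a * real j \<le> real m * real j" using assms by (intro mult_right_mono) simp_all
      then show ?thesis by (simp add: algebra_simps)
    qed
    have nn: "(real a - real j) * real m \<ge> 0" using True by simp
    have "real (a choose Suc j) * real m ^ Suc j
        = ((real a - real j) * real m) * (real (a choose j) * real m ^ j) / real (Suc j)"
      unfolding binom_step_real ra by (simp add: field_simps)
    also have "\<dots> \<le> ((real a - real j) * real m) * (real (m choose j) * real a ^ j) / real (Suc j)"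
      by (intro divide_right_mono mult_left_mono Suc.IH nn) simp
    also have "\<dots> \<le> ((real m - real j) * real a) * (real (m choose j) * real a ^ j) / real (Suc j)"
      by (intro divide_right_mono mult_right_mono key) simp_all
    also have "\<dots> = real (m choose Suc j) * real a ^ Suc j"
      unfolding binom_step_real[of m j] rm by (simp add: field_simps)
    finally show ?thesis .
  qed
qed

lemma binom_ratio_le':
  assumes "a \<le> m" "k \<le> m"
  shows "real (a choose k) / real (m choose k) \<le> (real a / real m) ^ k"
proof (cases "m = 0")
  case True then show ?thesis using assms by simp
next
  case False
  have m: "real m > 0" using False by simp
  have C: "real (m choose k) > 0" using assms by simp
  show ?thesis using binom_ratio_le[OF assms(1), of k] m C
    by (simp add: power_divide divide_simps mult.commute)
qed

lemma binom_ratio_ge: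
  assumes "d + k \<le> m" "j \<le> k"
  shows "real (m choose j) * (real m - real d - real k + 1) ^ j \<le> real ((m - d) choose j) * (real m - real k + 1) ^ j"
  using assms(2)
proof (induction j)
  case 0 then show ?case by simp
next
  case (Suc j)
  have jk: "j < k" using Suc by simp
  have r1: "real (m - j) = real m - real j" using jk assms by simp
  have r2: "real (m - d - j) = real m - real d - real j" using jk assms by simp
  have key: "(real m - real j) * (real m - real d - real k + 1) \<le> (real m - real d - real j) * (real m - real k + 1)"
  proof -
    have "(real m - real j) * (real m - real d - real k + 1) - (real m - real d - real j) * (real m - real k + 1)
        = real d * (real j - real k + 1)" by (simp add: algebra_simps)
    moreover have "real d * (real j - real k + 1) \<le> 0" using jk by (simp add: mult_nonneg_nonpos)
    ultimately show ?thesis by linarith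
  qed
  have nn1: "(real m - real j) * (real m - real d - real k + 1) \<ge> 0" using jk assms by simp
  have nn2: "real m - real k + 1 \<ge> 0" using assms by simp
  have "real (m choose Suc j) * (real m - real d - real k + 1) ^ Suc j
      = ((real m - real j) * (real m - real d - real k + 1)) * (real (m choose j) * (real m - real d - real k + 1) ^ j) / real (Suc j)"
    unfolding binom_step_real r1 by (simp add: field_simps)
  also have "\<dots> \<le> ((real m - real j) * (real m - real d - real k + 1)) * (real ((m - d) choose j) * (real m - real k + 1) ^ j) / real (Suc j)"
    using Suc jk by (intro divide_right_mono mult_left_mono nn1) simp_all
  also have "\<dots> \<le> ((real m - real d - real j) * (real m - real k + 1)) * (real ((m - d) choose j) * (real m - real k + 1) ^ j) / real (Suc j)"
    using nn2 by (intro divide_right_mono mult_right_mono key) simp_all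
  also have "\<dots> = real ((m - d) choose Suc j) * (real m - real k + 1) ^ Suc j"
    unfolding binom_step_real[of "m - d" j] r2 by (simp add: field_simps)
  finally show ?case .
qed

lemma binom_sq:
  assumes "2 * d \<le> m"
  shows "real ((m - 2 * d) choose j) * real (m choose j) \<le> real ((m - d) choose j) ^ 2"
proof (induction j)
  case 0 then show ?case by simp
next
  case (Suc j)
  show ?case
  proof (cases "j < m - 2 * d")
    case False
    then show ?thesis by (simp add: binomial_eq_0)
  next
    case True
    have r1: "real (m - 2 * d - j) = real m - 2 * real d - real j" using True assms by simp
    have r2: "real (m - j) = real m - real j" using True assms by simp
    have r3: "real (m - d - j) = real m - real d - real j" using True assms by simp
    have key: "(real m - 2 * real d - real j) * (real m - real j) \<le> (real m - real d - real j)\<^sup>2"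
    proof -
      have "(real m - real d - real j)\<^sup>2 - (real m - 2 * real d - real j) * (real m - real j) = (real d)\<^sup>2"
        by (simp add: algebra_simps power2_eq_square)
      then show ?thesis by (smt (verit) zero_le_power2)
    qed
    have nn: "(real m - 2 * real d - real j) * (real m - real j) \<ge> 0" using True assms by simp
    have "real ((m - 2 * d) choose Suc j) * real (m choose Suc j)
        = ((real m - 2 * real d - real j) * (real m - real j)) * (real ((m - 2 * d) choose j) * real (m choose j)) / (real (Suc j))\<^sup>2"
      unfolding binom_step_real r1 r2 by (simp add: field_simps power2_eq_square)
    also have "\<dots> \<le> ((real m - 2 * real d - real j) * (real m - real j)) * (real ((m - d) choose j) ^ 2) / (real (Suc j))\<^sup>2"
      by (intro divide_right_mono mult_left_mono Suc.IH nn) simp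
    also have "\<dots> \<le> (real m - real d - real j)\<^sup>2 * (real ((m - d) choose j) ^ 2) / (real (Suc j))\<^sup>2"
      by (intro divide_right_mono mult_right_mono key) simp_all
    also have "\<dots> = real ((m - d) choose Suc j) ^ 2"
      unfolding binom_step_real[of "m - d" j] r3 by (simp add: field_simps power2_eq_square)
    finally show ?thesis .
  qed
qed

lemma pow_le_fact_exp: "real t ^ t \<le> fact t * exp (real t)"
proof (induction t)
  case 0 then show ?case by simp
next
  case (Suc t)
  have a: "real (Suc t) ^ t \<le> exp 1 * real t ^ t"
  proof (cases "t = 0")
    case True then show ?thesis by simp
  next
    case False
    then have tp: "real t > 0" by simp
    have "real (Suc t) = real t * (1 + 1 / real t)" using tp by (simp add: field_simps)
    also have "\<dots> \<le> real t * exp (1 / real t)"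
      using tp by (intro mult_left_mono) (simp_all add: add.commute)
    finally have "real (Suc t) ^ t \<le> (real t * exp (1 / real t)) ^ t"
      by (intro power_mono) simp_all
    also have "\<dots> = real t ^ t * exp (real t * (1 / real t))"
      by (simp add: power_mult_distrib exp_of_nat_mult[symmetric])
    also have "\<dots> = exp 1 * real t ^ t" using tp by simp
    finally show ?thesis .
  qed
  have "real (Suc t) ^ Suc t = real (Suc t) * real (Suc t) ^ t" by simp
  also have "\<dots> \<le> real (Suc t) * (exp 1 * real t ^ t)" by (intro mult_left_mono a) simp
  also have "\<dots> \<le> real (Suc t) * (exp 1 * (fact t * exp (real t)))"
    by (intro mult_left_mono Suc.IH) simp_all
  also have "\<dots> = fact (Suc t) * exp (real (Suc t))"
    by (simp add: exp_add[symmetric] algebra_simps)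
  finally show ?case .
qed

lemma binom_le_exp_pow:
  assumes "t \<ge> 1"
  shows "real (m choose t) \<le> (exp 1 * real m / real t) ^ t"
proof -
  have "real (m choose t) * fact t \<le> real m ^ t"
    using binomial_fact_pow[of m t] by (metis of_nat_fact of_nat_le_iff of_nat_mult of_nat_power)
  have tp: "real t > 0" using assms by simp
  have "real (m choose t) * real t ^ t \<le> real (m choose t) * (fact t * exp (real t))"
    by (intro mult_left_mono pow_le_fact_exp) simp
  also have "\<dots> = (real (m choose t) * fact t) * exp (real t)" by simp
  also have "\<dots> \<le> real m ^ t * exp (real t)"
    by (intro mult_right_mono \<open>real (m choose t) * fact t \<le> real m ^ t\<close>) simp
  finally have "real (m choose t) * real t ^ t \<le> real m ^ t * exp (real t)" .
  moreover have "(exp 1 * real m / real t) ^ t = real m ^ t * exp (real t) / real t ^ t"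
  proof -
    have e: "exp 1 ^ t = exp (real t)" using exp_of_nat_mult[of t "1::real"] by simp
    show ?thesis by (simp add: power_divide power_mult_distrib e mult.commute)
  qed
  ultimately show ?thesis using tp by (simp only: pos_le_divide_eq zero_less_power)
qed



lemma pow_exp_ln: "0 < (x::real) \<Longrightarrow> x ^ n = exp (real n * ln x)"
  by (simp add: exp_of_nat_mult)

lemma geom_le:
  fixes a :: real
  assumes "0 \<le> a" "a \<le> 1/2"
  shows "(\<Sum>s\<in>{1..N}. a ^ s) \<le> 2 * a"
proof -
  have "(\<Sum>s\<in>{1..N}. a ^ s) = (\<Sum>i<N. a ^ Suc i)"
    using sum.atLeast1_atMost_eq[of "\<lambda>s. a ^ s" N] by simp
  also have "\<dots> = a * (\<Sum>i<N. a ^ i)" by (simp add: sum_distrib_left)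
  finally have e: "(\<Sum>s\<in>{1..N}. a ^ s) = a * (\<Sum>i<N. a ^ i)" .
  have "(\<Sum>i<N. a ^ i) = (1 - a ^ N) / (1 - a)" using assms by (simp add: sum_gp_strict)
  also have "\<dots> \<le> 1 / (1 - a)" using assms by (intro divide_right_mono) simp_all
  also have "\<dots> \<le> 2" using assms by (simp add: field_simps)
  finally have "(\<Sum>i<N. a ^ i) \<le> 2" .
  then show ?thesis unfolding e using assms by (simp add: mult_left_mono mult.commute)
qed

lemma binom_le_exp1:
  assumes "1 \<le> s" "1 \<le> n"
  shows "real (n choose s) \<le> exp (real s * (1 + ln (real n / real s)))"
proof -
  have pos: "exp 1 * real n / real s > 0" using assms by simp
  have "real (n choose s) \<le> (exp 1 * real n / real s) ^ s" by (rule binom_le_exp_pow[OF assms(1)])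
  also have "\<dots> = exp (real s * ln (exp 1 * real n / real s))"
    using pos by (rule pow_exp_ln)
  also have "ln (exp 1 * real n / real s) = 1 + ln (real n / real s)"
    using assms by (simp add: ln_mult ln_div)
  finally show ?thesis .
qed

lemma binom_le_exp2:
  assumes "1 \<le> n"
  shows "real (n choose s) \<le> exp (real s * ln (real n))"
proof (cases "s \<le> n")
  case True
  have "real (n choose s) \<le> real n ^ s" using binomial_le_pow[OF True] by (metis of_nat_le_iff of_nat_power)
  also have "\<dots> = exp (real s * ln (real n))" using assms by (intro pow_exp_ln) simp
  finally show ?thesis .
next
  case False then show ?thesis by (simp add: binomial_eq_0)
qed

lemma binom_le_exp3: "real (n choose s) \<le> exp (real n * ln 2)"
proof -
  have "real (n choose s) \<le> 2 ^ n" using binomial_le_pow2[of n s] by (metis of_nat_le_iff of_nat_numeral of_nat_power)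
  also have "(2::real) ^ n = exp (real n * ln 2)" by (rule pow_exp_ln) simp
  finally show ?thesis .
qed

lemma ratio_exp:
  assumes "k \<le> m" "t \<le> m" "0 < m"
  shows "real ((m - t) choose k) / real (m choose k) \<le> exp (- real k * real t / real m)"
proof -
  have "real ((m - t) choose k) / real (m choose k) \<le> (real (m - t) / real m) ^ k"
    using binom_ratio_le'[of "m - t" m k] assms by simp
  also have "real (m - t) / real m = 1 + (- real t / real m)" using assms by (simp add: field_simps)
  also have "(1 + (- real t / real m)) ^ k \<le> exp (- real t / real m) ^ k"
  proof (intro power_mono)
    show "1 + - real t / real m \<le> exp (- real t / real m)" by (rule exp_ge_add_one_self)
    show "0 \<le> 1 + - real t / real m" using assms by (simp add: field_simps)
  qed
  also have "\<dots> = exp (- real k * real t / real m)" by (simp add: exp_of_nat_mult[symmetric])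
  finally show ?thesis .
qed

lemma ratio_exp_pow:
  assumes "k \<le> m" "t \<le> m" "0 < m"
  shows "(real ((m - t) choose k) / real (m choose k)) ^ r \<le> exp (- real k * real t * real r / real m)"
proof -
  have "(real ((m - t) choose k) / real (m choose k)) ^ r \<le> exp (- real k * real t / real m) ^ r"
    by (intro power_mono ratio_exp assms) simp
  also have "\<dots> = exp (- real k * real t * real r / real m)" by (simp add: exp_of_nat_mult[symmetric] mult_ac)
  finally show ?thesis .
qed

lemma ln_le_2sqrt: "0 < x \<Longrightarrow> ln x \<le> 2 * sqrt x"
proof -
  assume x: "0 < x"
  have "ln (sqrt x) \<le> sqrt x - 1" using x by (intro ln_le_minus_one) simp
  then show ?thesis using x by (simp add: ln_sqrt)
qed

lemma K_ineq: "100 \<le> (K::real) \<Longrightarrow> 1 + 2 * ln K \<le> K / 2"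
proof -
  assume K: "100 \<le> K"
  have "ln K \<le> 2 * sqrt K" using K by (intro ln_le_2sqrt) simp
  moreover have "sqrt K \<ge> 10" using K real_sqrt_le_mono[of 100 K] by simp
  moreover have "sqrt K * sqrt K = K" using K by simp
  moreover have "10 * sqrt K \<le> sqrt K * sqrt K"
    using \<open>sqrt K \<ge> 10\<close> K by (intro mult_right_mono) simp_all
  ultimately show ?thesis by linarith
qed



lemma prod_exp_le:
  fixes A B a b :: real
  assumes "0 \<le> A" "A \<le> exp a" "0 \<le> B" "B \<le> exp b" "a + b \<le> c"
  shows "A * B \<le> exp c"
proof -
  have "A * B \<le> exp a * exp b" using assms by (intro mult_mono) simp_all
  also have "\<dots> = exp (a + b)" by (simp add: exp_add)
  also have "\<dots> \<le> exp c" using assms by simp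
  finally show ?thesis .
qed

lemma small_A:
  fixes n m k s t :: nat and \<delta> :: real
  assumes \<delta>: "0 < \<delta>" "\<delta> \<le> 1"
    and hyp: "(1 + \<delta>) * real m * ln (real n) \<le> (real k)\<^sup>2 * real n"
    and n2: "2 \<le> n" and mn: "n \<le> m" and km: "k \<le> m"
    and s1: "1 \<le> s" and sn: "2 * s \<le> n" and tm: "t \<le> m"
    and tlow: "(1 - \<delta>/4) * real k * real s \<le> real t"
    and Nb: "ln (8 * exp 1 / \<delta>) \<le> 3/8 * ln (real n)"
  shows "real (n choose s) * (real ((m - t) choose k) / real (m choose k)) ^ (n - s)
         \<le> exp (- (\<delta>/8) * real s * ln (real n))"
proof -
  define N M K S where "N = real n" "M = real m" "K = real k" "S = real s"
  define L where "L = ln N"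
  have Npos: "N \<ge> 2" using n2 unfolding N_M_K_S_def by simp
  have Mpos: "M > 0" using n2 mn unfolding N_M_K_S_def by simp
  have MN: "N \<le> M" using mn unfolding N_M_K_S_def by simp
  have Spos: "S \<ge> 1" using s1 unfolding N_M_K_S_def by simp
  have SN: "2 * S \<le> N" using sn unfolding N_M_K_S_def by simp
  have K0: "K \<ge> 0" unfolding N_M_K_S_def by simp
  have lpos: "L > 0" unfolding L_def using Npos by simp
  define P where "P = K\<^sup>2 * N / M"
  have P: "(1 + \<delta>) * L \<le> P"
    using hyp Mpos unfolding P_def L_def N_M_K_S_def by (simp add: field_simps mult.commute)
  define E where "E = K * real t * (N - S) / M"
  have rns: "real (n - s) = N - S" using sn unfolding N_M_K_S_def by simp
  have R: "(real ((m - t) choose k) / real (m choose k)) ^ (n - s) \<le> exp (- E)"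
    using ratio_exp_pow[OF km tm, of "n - s"] Mpos unfolding E_def rns N_M_K_S_def by simp
  have Rnn: "0 \<le> (real ((m - t) choose k) / real (m choose k)) ^ (n - s)" by simp
  have tl: "(1 - \<delta>/4) * K * S \<le> real t" using tlow unfolding N_M_K_S_def by simp
  have low: "E \<ge> (1 - \<delta>/4) * S * P * ((N - S) / N)"
  proof -
    have "K * ((1 - \<delta>/4) * K * S) * (N - S) / M \<le> K * real t * (N - S) / M"
      using tl K0 SN Mpos Spos by (intro divide_right_mono mult_right_mono mult_left_mono) simp_all
    moreover have "K * ((1 - \<delta>/4) * K * S) * (N - S) / M = (1 - \<delta>/4) * S * P * ((N - S) / N)"
    proof -
      have e: "P * ((N - S) / N) = K * K * (N - S) / M" unfolding P_def using Npos Mpos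
        by (simp add: power2_eq_square field_simps)
      have "(1 - \<delta>/4) * S * P * ((N - S) / N) = (1 - \<delta>/4) * S * (P * ((N - S) / N))" by simp
      also have "\<dots> = K * ((1 - \<delta>/4) * K * S) * (N - S) / M" unfolding e by simp
      finally show ?thesis by simp
    qed
    ultimately show ?thesis unfolding E_def by simp
  qed
  have c1: "0 \<le> 1 - \<delta>/4" using \<delta> by simp
  have Pnn: "0 \<le> P" using P \<delta> lpos by (smt (verit) mult_pos_pos)
  have nn: "0 \<le> (1 - \<delta>/4) * S * P" using c1 Spos Pnn by simp
  show ?thesis
  proof (cases "S \<le> \<delta> * N / 8")
    case True
    have q: "(N - S) / N \<ge> 1 - \<delta>/8" using True Npos by (simp add: field_simps)
    have "(1 - \<delta>/4) * S * P * ((N - S) / N) \<ge> (1 - \<delta>/4) * S * P * (1 - \<delta>/8)"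
      using mult_left_mono[OF q nn] .
    moreover have "(1 - \<delta>/4) * S * P * (1 - \<delta>/8) \<ge> (1 - \<delta>/4) * S * ((1 + \<delta>) * L) * (1 - \<delta>/8)"
      using P c1 Spos \<delta> by (intro mult_right_mono mult_left_mono) simp_all
    moreover have "(1 - \<delta>/4) * S * ((1 + \<delta>) * L) * (1 - \<delta>/8) \<ge> (1 + \<delta>/4) * S * L"
    proof -
      have "(1 - \<delta>/4) * (1 + \<delta>) * (1 - \<delta>/8) - (1 + \<delta>/4) = \<delta> * (3/8 - 11 * \<delta> / 32 + \<delta>\<^sup>2 / 32)"
        by (simp add: field_simps power2_eq_square)
      moreover have "\<delta> * (3/8 - 11 * \<delta> / 32 + \<delta>\<^sup>2 / 32) \<ge> 0" using \<delta> by simp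
      ultimately have "(1 - \<delta>/4) * (1 + \<delta>) * (1 - \<delta>/8) \<ge> 1 + \<delta>/4" by linarith
      then have "((1 - \<delta>/4) * (1 + \<delta>) * (1 - \<delta>/8)) * (S * L) \<ge> (1 + \<delta>/4) * (S * L)"
        using Spos lpos by (intro mult_right_mono) simp_all
      then show ?thesis by (simp add: mult_ac)
    qed
    ultimately have El: "E \<ge> (1 + \<delta>/4) * S * L" using low by linarith
    have C: "real (n choose s) \<le> exp (S * L)"
      using binom_le_exp2[of n s] n2 unfolding N_M_K_S_def L_def by simp
    show ?thesis
      unfolding N_M_K_S_def[symmetric] L_def[symmetric]
    proof (rule prod_exp_le[OF _ C Rnn R])
      show "S * L + - E \<le> - (\<delta> / 8) * S * L"
      proof -
        have "(\<delta>/8) * (S * L) \<le> (\<delta>/4) * (S * L)" using Spos lpos \<delta> by (intro mult_right_mono) simp_all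
        then show ?thesis using El by (simp add: algebra_simps)
      qed
    qed simp
  next
    case False
    have q: "(N - S) / N \<ge> 1/2" using SN Npos by (simp add: field_simps)
    have "(1 - \<delta>/4) * S * P * ((N - S) / N) \<ge> (1 - \<delta>/4) * S * P * (1/2)"
      using mult_left_mono[OF q nn] .
    moreover have "(1 - \<delta>/4) * S * P * (1/2) \<ge> (1 - \<delta>/4) * S * ((1 + \<delta>) * L) * (1/2)"
      using P c1 Spos \<delta> by (intro mult_right_mono mult_left_mono) simp_all
    moreover have "(1 - \<delta>/4) * S * ((1 + \<delta>) * L) * (1/2) \<ge> S * L / 2"
    proof -
      have "(1 - \<delta>/4) * (1 + \<delta>) - 1 = \<delta> * (3/4 - \<delta>/4)" by (simp add: field_simps)
      moreover have "\<delta> * (3/4 - \<delta>/4) \<ge> 0" using \<delta> by simp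
      ultimately have "(1 - \<delta>/4) * (1 + \<delta>) \<ge> 1" by linarith
      then have "((1 - \<delta>/4) * (1 + \<delta>)) * (S * L) \<ge> 1 * (S * L)"
        using Spos lpos by (intro mult_right_mono) simp_all
      then show ?thesis by (simp add: mult_ac)
    qed
    ultimately have El: "E \<ge> S * L / 2" using low by linarith
    have NS: "N / S < 8 / \<delta>" using False \<delta> Spos by (simp add: field_simps)
    have "ln (N / S) \<le> ln (8 / \<delta>)" using NS Npos Spos \<delta> by (intro ln_mono) simp_all
    then have "1 + ln (N / S) \<le> ln (8 * exp 1 / \<delta>)" using \<delta> by (simp add: ln_div ln_mult)
    then have lnb: "1 + ln (N / S) \<le> 3/8 * L" using Nb unfolding L_def N_M_K_S_def by simp
    have C0: "real (n choose s) \<le> exp (S * (1 + ln (N / S)))"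
      using binom_le_exp1[of s n] n2 s1 unfolding N_M_K_S_def by simp
    also have "\<dots> \<le> exp (S * (3/8 * L))" using lnb Spos by (simp add: mult_left_mono)
    finally have C: "real (n choose s) \<le> exp (S * (3/8 * L))" .
    show ?thesis
      unfolding N_M_K_S_def[symmetric] L_def[symmetric]
    proof (rule prod_exp_le[OF _ C Rnn R])
      show "S * (3/8 * L) + - E \<le> - (\<delta> / 8) * S * L"
      proof -
        have "(\<delta>/8) * (S * L) \<le> (1/8) * (S * L)" using Spos lpos \<delta> by (intro mult_right_mono) simp_all
        then show ?thesis using El by (simp add: algebra_simps)
      qed
    qed simp
  qed
qed


lemma small_B:
  fixes n m k s t :: nat and \<delta> :: real
  assumes \<delta>: "0 < \<delta>" "\<delta> \<le> 1"
    and n2: "2 \<le> n" and mn: "n \<le> m" and km: "k \<le> m" and k1: "1 \<le> k"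
    and s1: "1 \<le> s" and sn: "2 * s \<le> n"
    and small: "real k * real s \<le> exp (- 16 / \<delta>) * real m"
    and tup: "real t \<le> (1 - \<delta>/8) * real k * real s"
    and Kb1: "100 \<le> real k" and Kb2: "16 / \<delta> \<le> ln (real k)"
  shows "real (n choose s) * (real (m choose t) * (real (t choose k) / real (m choose k)) ^ s)
         \<le> exp (- real k * real s / 2)"
proof (cases "t = 0")
  case True
  then have "t < k" using k1 by simp
  then show ?thesis using s1 by (simp add: binomial_eq_0 zero_power)
next
  case False
  then have t1: "1 \<le> t" by simp
  define N M K S T where "N = real n" "M = real m" "K = real k" "S = real s" "T = real t"
  define \<eta> where "\<eta> = \<delta> / 8"
  have \<eta>: "0 < \<eta>" "\<eta> \<le> 1/8" using \<delta> unfolding \<eta>_def by simp_all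
  have Npos: "N \<ge> 2" using n2 unfolding N_M_K_S_T_def by simp
  have MN: "N \<le> M" using mn unfolding N_M_K_S_T_def by simp
  have Mpos: "M > 0" using MN Npos by simp
  have Spos: "S \<ge> 1" using s1 unfolding N_M_K_S_T_def by simp
  have SN: "2 * S \<le> N" using sn unfolding N_M_K_S_T_def by simp
  have Kb: "K \<ge> 100" using Kb1 unfolding N_M_K_S_T_def by simp
  have Tpos: "T \<ge> 1" using t1 unfolding N_M_K_S_T_def by simp
  have tu: "T \<le> (1 - \<eta>) * K * S" using tup unfolding N_M_K_S_T_def \<eta>_def by simp
  have KS: "K * S \<le> exp (- 2 / \<eta>) * M" using small unfolding N_M_K_S_T_def \<eta>_def by simp
  have lnK: "2 / \<eta> \<le> ln K" using Kb2 unfolding N_M_K_S_T_def \<eta>_def by simp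
  have TKS: "T \<le> K * S"
  proof -
    have "\<eta> * K * S \<ge> 0" using \<eta> Kb Spos by simp
    then show ?thesis using tu by (simp add: algebra_simps)
  qed
  have tks: "t \<le> k * s" using TKS unfolding N_M_K_S_T_def by (metis of_nat_le_iff of_nat_mult)
  have tm: "t \<le> m"
  proof -
    have "exp (- 2 / \<eta>) \<le> 1" using \<eta> by simp
    then have "exp (- 2 / \<eta>) * M \<le> M" using Mpos by (simp add: mult_le_cancel_right1)
    then have "T \<le> M" using TKS KS by linarith
    then show ?thesis unfolding N_M_K_S_T_def by simp
  qed
  define Lg where "Lg = ln (M / (K * S))"
  have KSpos: "K * S > 0" using Kb Spos by simp
  have Lg: "Lg \<ge> 2 / \<eta>"
  proof -
    have "K * S / M \<le> exp (- 2 / \<eta>)" using KS Mpos by (simp add: field_simps)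
    then have "ln (K * S / M) \<le> ln (exp (- 2 / \<eta>))" using KSpos Mpos by (intro ln_mono) simp_all
    then have "ln (K * S / M) \<le> - 2 / \<eta>" by simp
    moreover have "ln (K * S / M) = - Lg" unfolding Lg_def using KSpos Mpos by (simp add: ln_div)
    ultimately show ?thesis by simp
  qed
  have Lgnn: "Lg \<ge> 0"
  proof -
    have "2 / \<eta> > 0" using \<eta> by simp
    then show ?thesis using Lg by linarith
  qed
  have r1: "real (t choose k) / real (m choose k) \<le> (T / M) ^ k"
    using binom_ratio_le'[OF tm km] unfolding N_M_K_S_T_def by simp
  have X1: "real (m choose t) * (real (t choose k) / real (m choose k)) ^ s
      \<le> (exp 1 * M / T) ^ t * ((T / M) ^ k) ^ s"
    using binom_le_exp_pow[OF t1, of m] r1 unfolding N_M_K_S_T_def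
    by (intro mult_mono power_mono) simp_all
  have X2: "(exp 1 * M / T) ^ t * ((T / M) ^ k) ^ s = exp T * (T / M) ^ (k * s - t)"
  proof -
    have e1: "exp 1 ^ t = exp T" using exp_of_nat_mult[of t "1::real"] unfolding N_M_K_S_T_def by simp
    have "((T / M) ^ k) ^ s = (T / M) ^ t * (T / M) ^ (k * s - t)"
      using tks by (simp add: power_mult[symmetric] power_add[symmetric])
    moreover have "(exp 1 * M / T) ^ t * (T / M) ^ t = exp 1 ^ t"
    proof -
      have h: "exp 1 * M / T * (T / M) = exp 1" using Mpos Tpos by (simp add: field_simps)
      show ?thesis by (simp only: power_mult_distrib[symmetric] h)
    qed
    ultimately show ?thesis using e1 by (simp add: mult_ac power_mult_distrib)
  qed
  have ksT: "real (k * s - t) = K * S - T" using tks unfolding N_M_K_S_T_def by simp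
  have X3: "(T / M) ^ (k * s - t) \<le> exp (- (\<eta> * K * S) * Lg)"
  proof -
    have "(T / M) ^ (k * s - t) = exp ((K * S - T) * ln (T / M))"
      using Tpos Mpos by (subst pow_exp_ln) (simp_all add: ksT)
    also have "(K * S - T) * ln (T / M) \<le> (K * S - T) * (- Lg)"
    proof (rule mult_left_mono)
      have "ln (T / M) \<le> ln (K * S / M)" using Tpos Mpos TKS by (intro ln_mono divide_right_mono) simp_all
      also have "\<dots> = - Lg" unfolding Lg_def using KSpos Mpos by (simp add: ln_div)
      finally show "ln (T / M) \<le> - Lg" .
      show "0 \<le> K * S - T" using TKS by simp
    qed
    also have "(K * S - T) * (- Lg) \<le> (\<eta> * K * S) * (- Lg)"
    proof -
      have "\<eta> * K * S \<le> K * S - T" using tu by (simp add: algebra_simps)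
      then show ?thesis using Lgnn by (simp add: mult_right_mono)
    qed
    finally show ?thesis by simp
  qed
  have X: "real (m choose t) * (real (t choose k) / real (m choose k)) ^ s \<le> exp (K * S - \<eta> * K * S * Lg)"
  proof -
    have "real (m choose t) * (real (t choose k) / real (m choose k)) ^ s \<le> exp T * exp (- (\<eta> * K * S) * Lg)"
    proof -
      have "exp T * (T / M) ^ (k * s - t) \<le> exp T * exp (- (\<eta> * K * S) * Lg)"
        by (rule mult_left_mono[OF X3]) simp
      then show ?thesis using X1 X2 by linarith
    qed
    also have "\<dots> = exp (T - \<eta> * K * S * Lg)" by (simp add: exp_add[symmetric])
    also have "\<dots> \<le> exp (K * S - \<eta> * K * S * Lg)" using TKS by simp
    finally show ?thesis .
  qed
  have C: "real (n choose s) \<le> exp (S * (1 + ln (N / S)))"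
    using binom_le_exp1[of s n] n2 s1 unfolding N_M_K_S_T_def by simp
  define lam where "lam = ln (N / S)"
  have Kineq: "1 + 2 * ln K \<le> K / 2" using K_ineq Kb by simp
  have lnKpos: "ln K > 0" using Kb by simp
  have key: "1 + lam + 3/2 * K \<le> \<eta> * K * Lg"
  proof (cases "S * K\<^sup>2 \<le> N")
    case True
    have "K\<^sup>2 \<le> N / S" using True Spos by (simp add: field_simps)
    then have "ln (K\<^sup>2) \<le> lam" unfolding lam_def using Kb by (intro ln_mono) simp_all
    then have lam: "2 * ln K \<le> lam" using Kb by (simp add: ln_realpow)
    have "ln (N / (K * S)) \<le> Lg" unfolding Lg_def using MN KSpos Npos by (intro ln_mono divide_right_mono) simp_all
    moreover have "ln (N / (K * S)) = lam - ln K" unfolding lam_def using Npos Spos Kb by (simp add: ln_div ln_mult)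
    ultimately have "lam / 2 \<le> Lg" using lam by linarith
    then have a: "\<eta> * K * (lam / 2) \<le> \<eta> * K * Lg" using \<eta> Kb by (intro mult_left_mono) simp_all
    have etaK: "\<eta> * K / 2 - 1 \<ge> 0"
    proof -
      have "ln K \<le> K - 1" using Kb by (intro ln_le_minus_one) simp
      then have "ln K \<le> K" by simp
      then have "2 / \<eta> \<le> K" using lnK by linarith
      then show ?thesis using \<eta> by (simp add: field_simps)
    qed
    have b: "(\<eta> * K / 2 - 1) * (2 * ln K) \<le> (\<eta> * K / 2 - 1) * lam" using lam etaK by (intro mult_left_mono)
    have c: "\<eta> * ln K \<ge> 2" using lnK \<eta> by (simp add: field_simps)
    have d: "K * (\<eta> * ln K) \<ge> K * 2" using c Kb by (intro mult_left_mono) simp_all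
    show ?thesis using a b d Kineq by (simp add: algebra_simps)
  next
    case False
    have "N / S < K\<^sup>2" using False Spos by (simp add: field_simps)
    then have "lam < ln (K\<^sup>2)" unfolding lam_def using Npos Spos Kb by (intro ln_less_cancel_iff[THEN iffD2]) simp_all
    then have lam: "lam < 2 * ln K" using Kb by (simp add: ln_realpow)
    have "\<eta> * Lg \<ge> 2" using Lg \<eta> by (simp add: field_simps)
    then have "K * (\<eta> * Lg) \<ge> K * 2" using Kb by (intro mult_left_mono) simp_all
    then show ?thesis using lam Kineq by (simp add: algebra_simps)
  qed
  show ?thesis
    unfolding N_M_K_S_T_def[symmetric]
  proof (rule prod_exp_le[OF _ C _ X])
    show "S * (1 + ln (N / S)) + (K * S - \<eta> * K * S * Lg) \<le> - K * S / 2"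
    proof -
      have "S * (1 + lam + 3/2 * K) \<le> S * (\<eta> * K * Lg)" using key Spos by (intro mult_left_mono) simp_all
      then show ?thesis unfolding lam_def by (simp add: algebra_simps)
    qed
  qed simp_all
qed


lemma large_A:
  fixes n m k s t :: nat
  assumes n2: "2 \<le> n" and mn: "n \<le> m" and km: "k \<le> m"
    and sn: "2 * s \<le> n" and tm: "t \<le> m"
    and tlow: "3 * real m / real k \<le> real t" and k1: "1 \<le> k"
  shows "real (n choose s) * (real ((m - t) choose k) / real (m choose k)) ^ (n - s) \<le> exp (- real n / 4)"
proof -
  have Mpos: "real m > 0" using n2 mn by simp
  have Kpos: "real k > 0" using k1 by simp
  have rns: "real (n - s) = real n - real s" using sn by simp
  have R: "(real ((m - t) choose k) / real (m choose k)) ^ (n - s) \<le> exp (- real k * real t * real (n - s) / real m)"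
    using ratio_exp_pow[OF km tm] Mpos by simp
  have "3 \<le> real k * real t / real m" using tlow Mpos Kpos by (simp add: field_simps)
  then have "3 * real (n - s) \<le> (real k * real t / real m) * real (n - s)" by (intro mult_right_mono) simp_all
  also have "\<dots> = real k * real t * real (n - s) / real m" by simp
  finally have E0: "3 * real (n - s) \<le> real k * real t * real (n - s) / real m" .
  have "real (n - s) \<ge> real n / 2" using sn rns by simp
  then have E: "real k * real t * real (n - s) / real m \<ge> 3 * (real n / 2)" using E0 by linarith
  have C: "real (n choose s) \<le> exp (real n * ln 2)" by (rule binom_le_exp3)
  show ?thesis
  proof (rule prod_exp_le[OF _ C _ R])
    have "real n * ln 2 \<le> real n * 1" using ln_2_less_1 by (intro mult_left_mono) simp_all
    then show "real n * ln 2 + - real k * real t * real (n - s) / real m \<le> - real n / 4" using E by simp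
  qed simp_all
qed

lemma colour_bound:
  fixes m k s t :: nat
  assumes t1: "1 \<le> t" and tks: "t \<le> k * s" and tm: "t \<le> m" and km: "k \<le> m"
  shows "real (m choose t) * (real (t choose k) / real (m choose k)) ^ s
       \<le> exp (real t + (real k * real s - real t) * ln (real t / real m))"
proof -
  define M T where "M = real m" "T = real t"
  have Tpos: "T \<ge> 1" using t1 unfolding M_T_def by simp
  have Mpos: "M > 0" using t1 tm unfolding M_T_def by simp
  have r1: "real (t choose k) / real (m choose k) \<le> (T / M) ^ k"
    using binom_ratio_le'[OF tm km] unfolding M_T_def by simp
  have X1: "real (m choose t) * (real (t choose k) / real (m choose k)) ^ s
      \<le> (exp 1 * M / T) ^ t * ((T / M) ^ k) ^ s"
    using binom_le_exp_pow[OF t1, of m] r1 unfolding M_T_def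
    by (intro mult_mono power_mono) simp_all
  have X2: "(exp 1 * M / T) ^ t * ((T / M) ^ k) ^ s = exp T * (T / M) ^ (k * s - t)"
  proof -
    have e1: "exp 1 ^ t = exp T" using exp_of_nat_mult[of t "1::real"] unfolding M_T_def by simp
    have "((T / M) ^ k) ^ s = (T / M) ^ t * (T / M) ^ (k * s - t)"
      using tks by (simp add: power_mult[symmetric] power_add[symmetric])
    moreover have "(exp 1 * M / T) ^ t * (T / M) ^ t = exp 1 ^ t"
    proof -
      have h: "exp 1 * M / T * (T / M) = exp 1" using Mpos Tpos by (simp add: field_simps)
      show ?thesis by (simp only: power_mult_distrib[symmetric] h)
    qed
    ultimately show ?thesis using e1 by (simp add: mult_ac power_mult_distrib)
  qed
  have ksT: "real (k * s - t) = real k * real s - T" using tks unfolding M_T_def by simp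
  have "(T / M) ^ (k * s - t) = exp ((real k * real s - T) * ln (T / M))"
    using Tpos Mpos by (subst pow_exp_ln) (simp_all add: ksT)
  then show ?thesis using X1 X2 unfolding M_T_def by (simp add: exp_add)
qed

lemma large_B:
  fixes n m k s t :: nat and \<theta> :: real
  assumes n2: "2 \<le> n" and mn: "n \<le> m" and km: "k \<le> m" and k1: "1 \<le> k"
    and s1: "1 \<le> s" and sn: "2 * s \<le> n"
    and \<theta>: "0 < \<theta>"
    and large: "\<theta> * real m < real k * real s"
    and Kt: "8 \<le> real k * \<theta>" and Kt2: "8 \<le> \<theta> * ln (real k / 4)"
    and Kb: "100 \<le> real k"
    and tlow: "3 * real m / real k \<le> real t" and tup: "real t \<le> 3 * real m / real k + 1"
  shows "real (n choose s) * (real (m choose t) * (real (t choose k) / real (m choose k)) ^ s)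
         \<le> exp (- real n / 4)"
proof -
  define N M K S T where "N = real n" "M = real m" "K = real k" "S = real s" "T = real t"
  have Npos: "N \<ge> 2" using n2 unfolding N_M_K_S_T_def by simp
  have MN: "N \<le> M" using mn unfolding N_M_K_S_T_def by simp
  have Mpos: "M > 0" using MN Npos by simp
  have Kb': "K \<ge> 100" using Kb unfolding N_M_K_S_T_def by simp
  have KM: "K \<le> M" using km unfolding N_M_K_S_T_def by simp
  have Spos: "S \<ge> 1" using s1 unfolding N_M_K_S_T_def by simp
  have tl: "3 * M / K \<le> T" and tu: "T \<le> 3 * M / K + 1" using tlow tup unfolding N_M_K_S_T_def by simp_all
  have MK1: "1 \<le> M / K" using KM Kb' by simp
  have T4: "T \<le> 4 * M / K" using tu MK1 by simp
  have Tpos: "T \<ge> 1"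
  proof -
    have "3 * M / K > 0" using Mpos Kb' by simp
    then have "T > 0" using tl by linarith
    then show ?thesis unfolding N_M_K_S_T_def by simp
  qed
  have lg: "\<theta> * M < K * S" using large unfolding N_M_K_S_T_def by simp
  have KS8: "8 * M / K \<le> K * S"
  proof -
    have "8 * M \<le> (K * \<theta>) * M" using Kt Mpos unfolding N_M_K_S_T_def by (intro mult_right_mono) simp_all
    then have "8 * M / K \<le> \<theta> * M" using Kb' by (simp add: field_simps)
    then show ?thesis using lg by simp
  qed
  have TKS: "T \<le> K * S / 2" using T4 KS8 by simp
  have t1: "1 \<le> t" using Tpos unfolding N_M_K_S_T_def by simp
  have tks: "t \<le> k * s"
  proof -
    have "T \<le> K * S" using TKS Kb' Spos Tpos by simp
    then show ?thesis unfolding N_M_K_S_T_def by (metis of_nat_le_iff of_nat_mult)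
  qed
  have tm: "t \<le> m"
  proof -
    have "4 * M / K \<le> M" using Kb' Mpos by (simp add: field_simps)
    then show ?thesis using T4 unfolding N_M_K_S_T_def by simp
  qed
  have X: "real (m choose t) * (real (t choose k) / real (m choose k)) ^ s
       \<le> exp (T + (K * S - T) * ln (T / M))"
    using colour_bound[OF t1 tks tm km] unfolding N_M_K_S_T_def by simp
  have lnK4: "ln (K / 4) \<ge> 2"
  proof -
    have "exp 2 \<le> (25::real)"
    proof -
      have "exp (1::real) \<le> 3" using exp_le by simp
      then have "exp 1 * exp 1 \<le> (3::real) * 3" by (intro mult_mono) simp_all
      then show ?thesis by (simp add: exp_add[symmetric])
    qed
    then have "exp 2 \<le> K / 4" using Kb' by simp
    then show ?thesis using Kb' by (simp add: ln_ge_iff)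
  qed
  have lnTM: "ln (T / M) \<le> - ln (K / 4)"
  proof -
    have "T / M \<le> 4 / K" using T4 Mpos Kb' by (simp add: field_simps)
    then have "ln (T / M) \<le> ln (4 / K)" using Tpos Mpos by (intro ln_mono) simp_all
    also have "ln (4 / K) = - ln (K / 4)" using Kb' by (simp add: ln_div)
    finally show ?thesis .
  qed
  have e2: "(K * S - T) * ln (T / M) \<le> - (K * S / 2) * ln (K / 4)"
  proof -
    have "(K * S - T) * ln (T / M) \<le> (K * S - T) * (- ln (K / 4))"
      using lnTM TKS Kb' Spos Tpos by (intro mult_left_mono) simp_all
    also have "\<dots> \<le> (K * S / 2) * (- ln (K / 4))"
      using TKS lnK4 by (intro mult_right_mono_neg) simp_all
    finally show ?thesis by simp
  qed
  have e3: "(K * S / 2) * ln (K / 4) \<ge> 4 * M / K + 2 * N"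
  proof -
    have a: "(K * S / 4) * ln (K / 4) \<ge> (2 * M / K) * 2"
      using KS8 lnK4 Mpos Kb' Spos by (intro mult_mono) (simp_all add: field_simps)
    have "(K * S / 4) * ln (K / 4) \<ge> (\<theta> * M / 4) * ln (K / 4)"
      using lg lnK4 by (intro mult_right_mono) simp_all
    moreover have "(\<theta> * M / 4) * ln (K / 4) = (\<theta> * ln (K / 4)) * M / 4" by simp
    moreover have "(\<theta> * ln (K / 4)) * M / 4 \<ge> 8 * M / 4"
      using Kt2 Mpos unfolding N_M_K_S_T_def by (intro divide_right_mono mult_right_mono) simp_all
    ultimately have b: "(K * S / 4) * ln (K / 4) \<ge> 2 * N" using MN by linarith
    show ?thesis using a b by simp
  qed
  have C: "real (n choose s) \<le> exp (N * ln 2)" using binom_le_exp3 unfolding N_M_K_S_T_def by simp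
  show ?thesis
    unfolding N_M_K_S_T_def[symmetric]
  proof (rule prod_exp_le[OF _ C _ X])
    have "N * ln 2 \<le> N * 1" using ln_2_less_1 Npos by (intro mult_left_mono) simp_all
    moreover have "T \<le> 4 * (M / K)" using T4 by simp
    moreover have "(K * S / 2) * ln (K / 4) \<ge> 4 * (M / K) + 2 * N" using e3 by simp
    ultimately show "N * ln 2 + (T + (K * S - T) * ln (T / M)) \<le> - N / 4"
      using e2 Npos by linarith
  qed simp_all
qed



lemma disc_bound:
  fixes n m k :: nat and \<delta> :: real
  defines "\<theta> \<equiv> exp (- 16 / \<delta>)"
  assumes \<delta>: "0 < \<delta>" "\<delta> \<le> 1"
    and hyp: "(1 + \<delta>) * real m * ln (real n) \<le> (real k)\<^sup>2 * real n"
    and n2: "2 \<le> n" and mn: "n \<le> m" and km: "k \<le> m" and k1: "1 \<le> k"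
    and Kb1: "100 \<le> real k" and Kb2: "16 / \<delta> \<le> ln (real k)" and Kb3: "8 / \<delta> \<le> real k"
    and Kt: "8 \<le> real k * \<theta>" and Kt2: "8 \<le> \<theta> * ln (real k / 4)"
    and Nb: "ln (8 * exp 1 / \<delta>) \<le> 3/8 * ln (real n)"
    and Nb2: "exp (- (\<delta>/8) * ln (real n)) \<le> 1/2"
  shows "rig_prob n m k (\<lambda>F. \<not> rig_connected n F)
     \<le> 2 * exp (- (\<delta>/8) * ln (real n)) + 2 * exp (- real k / 2) + 2 * real n * exp (- real n / 4)"
proof -
  define raw where "raw s = (if real k * real s \<le> \<theta> * real m
      then nat \<lfloor>(1 - \<delta>/8) * real k * real s\<rfloor> else nat \<lceil>3 * real m / real k\<rceil>)" for s
  define t where "t s = min m (raw s)" for s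
  have tm: "\<And>s. t s \<le> m" unfolding t_def by simp
  define a where "a = exp (- (\<delta>/8) * ln (real n))"
  define b where "b = exp (- real k / 2)"
  define c where "c = exp (- real n / 4)"
  let ?term = "\<lambda>s. real (n choose s) *
          (real (m choose t s) * (real (t s choose k) / real (m choose k)) ^ s
           + (real ((m - t s) choose k) / real (m choose k)) ^ (n - s))"
  have \<theta>pos: "\<theta> > 0" unfolding \<theta>_def by simp
  have Kpos: "real k > 0" using k1 by simp
  have term_le: "?term s \<le> a ^ s + b ^ s + 2 * c" if s: "s \<in> {1..n div 2}" for s
  proof -
    have s1: "1 \<le> s" and sn: "2 * s \<le> n" using s by auto
    have dist: "?term s = real (n choose s) * (real (m choose t s) * (real (t s choose k) / real (m choose k)) ^ s)
        + real (n choose s) * (real ((m - t s) choose k) / real (m choose k)) ^ (n - s)"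
      by (simp add: distrib_left)
    show ?thesis
    proof (cases "real k * real s \<le> \<theta> * real m")
      case True
      define x where "x = (1 - \<delta>/8) * real k * real s"
      have x0: "x \<ge> 0" unfolding x_def using \<delta> by simp
      have rawd: "raw s = nat \<lfloor>x\<rfloor>" unfolding raw_def x_def using True by simp
      have rr: "real (raw s) = of_int \<lfloor>x\<rfloor>" unfolding rawd using x0 by simp
      have rup: "real (raw s) \<le> x" unfolding rr by simp
      have rlow: "real (raw s) > x - 1" unfolding rr by linarith
      have xle: "x \<le> real m"
      proof -
        have "x \<le> real k * real s" unfolding x_def using \<delta> Kpos s1 by (simp add: mult_le_cancel_right1 algebra_simps)
        also have "\<dots> \<le> \<theta> * real m" by (rule True)
        also have "\<dots> \<le> 1 * real m" unfolding \<theta>_def using \<delta> by (intro mult_right_mono) simp_all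
        finally show ?thesis by simp
      qed
      have rm: "raw s \<le> m" using rup xle by linarith
      have ts: "t s = raw s" unfolding t_def using rm by simp
      have tlow: "(1 - \<delta>/4) * real k * real s \<le> real (t s)"
      proof -
        have "1 \<le> (\<delta>/8) * real k * real s"
        proof -
          have "1 \<le> (\<delta>/8) * real k" using Kb3 \<delta> by (simp add: field_simps)
          also have "\<dots> \<le> (\<delta>/8) * real k * real s"
            using mult_left_mono[of 1 "real s" "\<delta>/8*real k"] s1 \<delta> Kpos by simp
          finally show ?thesis .
        qed
        then have "(1 - \<delta>/4) * real k * real s \<le> x - 1" unfolding x_def by (simp add: algebra_simps)
        then show ?thesis using rlow ts by simp
      qed
      have tup: "real (t s) \<le> (1 - \<delta>/8) * real k * real s" using rup ts unfolding x_def by simp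
      have A: "real (n choose s) * (real ((m - t s) choose k) / real (m choose k)) ^ (n - s)
          \<le> exp (- (\<delta>/8) * real s * ln (real n))"
        by (rule small_A[OF \<delta> hyp n2 mn km s1 sn tm tlow Nb])
      have B: "real (n choose s) * (real (m choose t s) * (real (t s choose k) / real (m choose k)) ^ s)
          \<le> exp (- real k * real s / 2)"
        by (rule small_B[OF \<delta> n2 mn km k1 s1 sn _ tup Kb1 Kb2]) (use True \<theta>_def in \<open>simp add: mult.commute\<close>)
      have "exp (- (\<delta>/8) * real s * ln (real n)) = a ^ s"
        unfolding a_def by (simp add: exp_of_nat_mult[symmetric] mult_ac)
      moreover have "exp (- real k * real s / 2) = b ^ s"
        unfolding b_def by (simp add: exp_of_nat_mult[symmetric] mult_ac)
      moreover have "c \<ge> 0" unfolding c_def by simp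
      ultimately show ?thesis using A B dist by simp
    next
      case False
      define x where "x = 3 * real m / real k"
      have x0: "x \<ge> 0" unfolding x_def by simp
      have rawd: "raw s = nat \<lceil>x\<rceil>" unfolding raw_def x_def using False by simp
      have rr: "real (raw s) = of_int \<lceil>x\<rceil>" unfolding rawd using x0 by simp
      have rup: "real (raw s) \<le> x + 1" unfolding rr by linarith
      have rlow: "real (raw s) \<ge> x" unfolding rr by simp
      have xle: "x \<le> real m"
      proof -
        have "3 * real m \<le> real k * real m" using Kb1 by (intro mult_right_mono) simp_all
        then show ?thesis unfolding x_def using Kpos by (simp add: field_simps)
      qed
      have rm: "raw s \<le> m"
      proof -
        have "\<lceil>x\<rceil> \<le> int m" using xle by (simp add: ceiling_le_iff)
        then show ?thesis unfolding rawd using xle by simp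
      qed
      have ts: "t s = raw s" unfolding t_def using rm by simp
      have A: "real (n choose s) * (real ((m - t s) choose k) / real (m choose k)) ^ (n - s) \<le> c"
        unfolding c_def by (rule large_A[OF n2 mn km sn tm _ k1]) (use rlow ts x_def in simp)
      have B: "real (n choose s) * (real (m choose t s) * (real (t s choose k) / real (m choose k)) ^ s) \<le> c"
        unfolding c_def
        by (rule large_B[OF n2 mn km k1 s1 sn \<theta>pos _ Kt Kt2 Kb1]) (use False rlow rup ts x_def in auto)
      have "a ^ s \<ge> 0" "b ^ s \<ge> 0" unfolding a_def b_def by simp_all
      then show ?thesis using A B dist by simp
    qed
  qed
  have "rig_prob n m k (\<lambda>F. \<not> rig_connected n F) \<le> (\<Sum>s\<in>{1..n div 2}. ?term s)"
    by (rule prob_disc_le[OF tm km])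
  also have "\<dots> \<le> (\<Sum>s\<in>{1..n div 2}. a ^ s + b ^ s + 2 * c)"
    by (rule sum_mono) (rule term_le)
  also have "\<dots> = (\<Sum>s\<in>{1..n div 2}. a ^ s) + (\<Sum>s\<in>{1..n div 2}. b ^ s) + real (n div 2) * (2 * c)"
    by (simp add: sum.distrib)
  also have "\<dots> \<le> 2 * a + 2 * b + real n * (2 * c)"
  proof -
    have "(\<Sum>s\<in>{1..n div 2}. a ^ s) \<le> 2 * a" using Nb2 unfolding a_def by (intro geom_le) simp_all
    moreover have "(\<Sum>s\<in>{1..n div 2}. b ^ s) \<le> 2 * b"
    proof (rule geom_le)
      show "0 \<le> b" unfolding b_def by simp
      have "exp (- real k / 2) \<le> exp (- 1)" using Kb1 by simp
      also have "exp (- 1) \<le> (1/2::real)"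
      proof -
        have "2 \<le> exp (1::real)" using exp_ge_add_one_self[of 1] by simp
        then show ?thesis by (simp add: exp_minus field_simps)
      qed
      finally show "b \<le> 1/2" unfolding b_def .
    qed
    moreover have "real (n div 2) * (2 * c) \<le> real n * (2 * c)"
      unfolding c_def by (intro mult_right_mono) simp_all
    ultimately show ?thesis by linarith
  qed
  finally show ?thesis unfolding a_def b_def c_def by (simp add: mult_ac)
qed



lemma cheb_expr_le:
  fixes q1 q2 :: real and n :: nat
  assumes q1: "0 < q1" "q1 \<le> 1" and q2: "0 \<le> q2" "q2 \<le> q1\<^sup>2" and n2: "2 \<le> n"
  defines "\<mu> \<equiv> real n * q1 ^ (n - 1)"
  shows "((\<mu> + real n * (real n - 1) * (q1 * q2 ^ (n - 2))) - \<mu>\<^sup>2) / \<mu>\<^sup>2 \<le> 1 / \<mu> + 1 / q1 - 1"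
proof -
  have mupos: "\<mu> > 0" unfolding \<mu>_def using q1 n2 by simp
  have "q2 ^ (n - 2) \<le> (q1\<^sup>2) ^ (n - 2)" using q2 by (intro power_mono) simp_all
  then have "q1 * q2 ^ (n - 2) \<le> q1 * (q1\<^sup>2) ^ (n - 2)" using q1 by (intro mult_left_mono) simp_all
  moreover have "real n * (real n - 1) \<le> real n * real n" by (intro mult_left_mono) simp_all
  ultimately have "real n * (real n - 1) * (q1 * q2 ^ (n - 2)) \<le> real n * real n * (q1 * (q1\<^sup>2) ^ (n - 2))"
    using q1 q2 n2 by (intro mult_mono) simp_all
  also have "\<dots> = \<mu>\<^sup>2 / q1"
  proof -
    have e: "2 * (n - 1) = Suc (2 * (n - 2) + 1)" using n2 by simp
    have "\<mu>\<^sup>2 = real n * real n * q1 ^ (2 * (n - 1))"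
      unfolding \<mu>_def by (simp add: power2_eq_square power_mult[symmetric] mult_2 power_add)
    also have "\<dots> = real n * real n * (q1 * (q1 * (q1\<^sup>2) ^ (n - 2)))"
      unfolding e by (simp add: power_mult power2_eq_square mult_ac)
    finally show ?thesis using q1 by (simp add: field_simps)
  qed
  finally have b: "real n * (real n - 1) * (q1 * q2 ^ (n - 2)) \<le> \<mu>\<^sup>2 / q1" .
  have "((\<mu> + real n * (real n - 1) * (q1 * q2 ^ (n - 2))) - \<mu>\<^sup>2) / \<mu>\<^sup>2
      = 1 / \<mu> + real n * (real n - 1) * (q1 * q2 ^ (n - 2)) / \<mu>\<^sup>2 - 1"
    using mupos by (simp add: field_simps power2_eq_square)
  also have "real n * (real n - 1) * (q1 * q2 ^ (n - 2)) / \<mu>\<^sup>2 \<le> (\<mu>\<^sup>2 / q1) / \<mu>\<^sup>2"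
    using b mupos by (intro divide_right_mono) simp_all
  also have "(\<mu>\<^sup>2 / q1) / \<mu>\<^sup>2 = 1 / q1" using mupos by simp
  finally show ?thesis by simp
qed

lemma notconn_bound:
  fixes n m k :: nat and y :: real
  assumes y: "0 < y" "y < 1"
    and hyp: "(real k)\<^sup>2 * real n \<le> y * real m * ln (real n)"
    and n3: "3 \<le> n" and mn: "n \<le> m" and k1: "1 \<le> k"
    and Nb1: "ln (real n) / real n \<le> (1 - y) / 20" and Nb2: "ln (real n) / real n \<le> 1/4"
  shows "rig_prob n m k (\<lambda>F. \<not> rig_connected n F)
     \<ge> 1 - exp (- ((1 - y) / 2) * ln (real n)) - 4 * (ln (real n) / real n)"
proof -
  define N M K where "N = real n" "M = real m" "K = real k"
  define L where "L = ln N / N"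
  have Npos: "N \<ge> 3" using n3 unfolding N_M_K_def by simp
  have MN: "N \<le> M" using mn unfolding N_M_K_def by simp
  have Mpos: "M > 0" using MN Npos by simp
  have K1: "K \<ge> 1" using k1 unfolding N_M_K_def by simp
  have lnpos: "ln N > 0" using Npos by simp
  have L0: "L > 0" unfolding L_def using lnpos Npos by simp
  have L1: "L \<le> (1 - y) / 20" "L \<le> 1/4" using Nb1 Nb2 unfolding L_def N_M_K_def by simp_all
  have K2: "K\<^sup>2 \<le> y * M * L"
  proof -
    have "K\<^sup>2 * N \<le> y * M * ln N" using hyp unfolding N_M_K_def by simp
    then show ?thesis unfolding L_def using Npos by (simp add: field_simps)
  qed
  have K2': "K\<^sup>2 \<le> M * L"
  proof -
    have "y * M * L \<le> 1 * M * L" using y Mpos L0 by (intro mult_right_mono) simp_all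
    then show ?thesis using K2 by simp
  qed
  have KK: "K \<le> K\<^sup>2" using K1 by (simp add: power2_eq_square)
  have KM4: "K \<le> M / 4"
  proof -
    have "M * L \<le> M * (1/4)" using L1 Mpos by (intro mult_left_mono) simp_all
    then show ?thesis using KK K2' by simp
  qed
  have km: "k \<le> m" using KM4 Mpos unfolding N_M_K_def by simp
  have k2m: "2 * k \<le> m" using KM4 Mpos unfolding N_M_K_def by simp
  define D where "D = M - K + 1"
  have Dge: "D \<ge> M * (1 - L)"
  proof -
    have "K \<le> M * L" using KK K2' by simp
    then show ?thesis unfolding D_def by (simp add: algebra_simps)
  qed
  have MLp: "M * (1 - L) > 0" using Mpos L1 by simp
  have Dpos: "D > 0" using MLp Dge by linarith
  define x where "x = K\<^sup>2 / D"
  have xnn: "x \<ge> 0" unfolding x_def using Dpos by simp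
  have x1: "x \<le> y * L / (1 - L)"
  proof -
    have "K\<^sup>2 / D \<le> (y * M * L) / D" using K2 Dpos by (intro divide_right_mono) simp_all
    also have "\<dots> \<le> (y * M * L) / (M * (1 - L))"
      using Dge MLp Dpos y L0 Mpos by (intro divide_left_mono) simp_all
    also have "\<dots> = y * L / (1 - L)" using Mpos by simp
    finally show ?thesis unfolding x_def .
  qed
  have x2: "x \<le> L * (y + 2 * L)"
  proof -
    have "y * L / (1 - L) \<le> y * L * (1 + 2 * L)"
    proof -
      have e: "(1 + 2 * L) * (1 - L) = 1 + L * (1 - 2 * L)" by (simp add: algebra_simps)
      have "L * (1 - 2 * L) \<ge> 0" using L1 L0 by simp
      then have "1 \<le> (1 + 2 * L) * (1 - L)" unfolding e by simp
      then have "1 / (1 - L) \<le> 1 + 2 * L" using L1 by (simp add: field_simps)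
      then have "(y * L) * (1 / (1 - L)) \<le> (y * L) * (1 + 2 * L)" using y L0 by (intro mult_left_mono) simp_all
      then show ?thesis by simp
    qed
    also have "\<dots> \<le> L * (y + 2 * L)"
    proof -
      have "y * (2 * L) \<le> 1 * (2 * L)" using y L0 by (intro mult_right_mono) simp_all
      then have "y * (1 + 2 * L) \<le> y + 2 * L" by (simp add: algebra_simps)
      then have "L * (y * (1 + 2 * L)) \<le> L * (y + 2 * L)" using L0 by (intro mult_left_mono) simp_all
      then show ?thesis by (simp add: mult_ac)
    qed
    finally show ?thesis using x1 by simp
  qed
  have x3: "x \<le> 2 * L"
  proof -
    have "y + 2 * L \<le> 2" using y L1 by simp
    then have "L * (y + 2 * L) \<le> L * 2" using L0 by (intro mult_left_mono) simp_all
    then show ?thesis using x2 by simp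
  qed
  have xhalf: "x \<le> 1/2" using x3 L1 by simp
  define q1 where "q1 = real ((m - k) choose k) / real (m choose k)"
  define q2 where "q2 = real ((m - 2 * k) choose k) / real (m choose k)"
  have Cpos: "real (m choose k) > 0" using km by simp
  have q1low: "q1 \<ge> 1 - x"
  proof -
    have "real (m choose k) * (real m - real k - real k + 1) ^ k \<le> real ((m - k) choose k) * (real m - real k + 1) ^ k"
      using binom_ratio_ge[of k k m k] k2m by simp
    then have "real (m choose k) * (M - K - K + 1) ^ k \<le> real ((m - k) choose k) * D ^ k"
      unfolding D_def N_M_K_def by simp
    then have r: "((M - K - K + 1) / D) ^ k \<le> q1"
      unfolding q1_def using Cpos Dpos by (simp add: power_divide field_simps)
    have "(M - K - K + 1) / D = 1 + (- K / D)" unfolding D_def using Dpos D_def by (simp add: field_simps)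
    moreover have "- 1 \<le> - K / D"
    proof -
      have "K \<le> D" unfolding D_def using KM4 Mpos by simp
      then show ?thesis using Dpos by (simp add: field_simps)
    qed
    ultimately have "1 + real k * (- K / D) \<le> ((M - K - K + 1) / D) ^ k"
      using Bernoulli_inequality[of "- K / D" k] by simp
    moreover have "real k * (- K / D) = - x" unfolding x_def N_M_K_def by (simp add: power2_eq_square)
    ultimately show ?thesis using r by simp
  qed
  have q1pos: "q1 > 0" using q1low xhalf by simp
  have q1le: "q1 \<le> 1" unfolding q1_def using Cpos binomial_right_mono[of "m - k" m k] by simp
  have q2nn: "q2 \<ge> 0" unfolding q2_def by simp
  have q2le: "q2 \<le> q1\<^sup>2"
  proof -
    have "real ((m - 2 * k) choose k) * real (m choose k) \<le> real ((m - k) choose k) ^ 2"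
      using binom_sq[OF k2m, of k] .
    then show ?thesis unfolding q1_def q2_def using Cpos by (simp add: power2_eq_square field_simps)
  qed
  have cpos: "((m - k) choose k) > 0"
  proof (rule ccontr)
    assume "\<not> ((m - k) choose k) > 0"
    then have "q1 = 0" unfolding q1_def by simp
    then show False using q1pos by simp
  qed
  define \<mu> where "\<mu> = real n * q1 ^ (n - 1)"
  have main: "rig_prob n m k (\<lambda>F. \<not> rig_connected n F)
     \<ge> 1 - ((\<mu> + real n * (real n - 1) * (q1 * q2 ^ (n - 2))) - \<mu>\<^sup>2) / \<mu>\<^sup>2"
    unfolding \<mu>_def q1_def q2_def using prob_notconn_lower[of n k m] n3 km cpos by simp
  have ch: "((\<mu> + real n * (real n - 1) * (q1 * q2 ^ (n - 2))) - \<mu>\<^sup>2) / \<mu>\<^sup>2 \<le> 1 / \<mu> + 1 / q1 - 1"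
    unfolding \<mu>_def using n3 by (intro cheb_expr_le q1pos q1le q2nn q2le) simp
  have t1: "1 / q1 - 1 \<le> 4 * L"
  proof -
    have "1 / q1 \<le> 1 / (1 - x)" using q1low xhalf by (intro divide_left_mono) simp_all
    moreover have "1 / (1 - x) - 1 \<le> 2 * x"
    proof -
      have "1 / (1 - x) - 1 = x / (1 - x)" using xhalf by (simp add: field_simps)
      also have "\<dots> \<le> x / (1/2)" using xhalf xnn by (intro divide_left_mono) simp_all
      finally show ?thesis by simp
    qed
    ultimately show ?thesis using x3 by simp
  qed
  have t2: "1 / \<mu> \<le> exp (- ((1 - y) / 2) * ln N)"
  proof -
    have xx: "x\<^sup>2 \<le> 4 * L\<^sup>2"
    proof -
      have "x\<^sup>2 \<le> (2 * L)\<^sup>2" using x3 xnn by (intro power_mono) simp_all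
      then show ?thesis by (simp add: power2_eq_square)
    qed
    have nx: "N * (x + 2 * x\<^sup>2) \<le> ln N * ((1 + y) / 2)"
    proof -
      have "x + 2 * x\<^sup>2 \<le> L * (y + 2 * L) + 8 * L\<^sup>2" using x2 xx by simp
      also have "\<dots> = L * (y + 10 * L)" by (simp add: algebra_simps power2_eq_square)
      also have "\<dots> \<le> L * ((1 + y) / 2)" using L1 L0 by (intro mult_left_mono) simp_all
      finally have "N * (x + 2 * x\<^sup>2) \<le> N * (L * ((1 + y) / 2))" using Npos by (intro mult_left_mono) simp_all
      also have "N * (L * ((1 + y) / 2)) = ln N * ((1 + y) / 2)" unfolding L_def using Npos by simp
      finally show ?thesis .
    qed
    have ln1: "- x - 2 * x\<^sup>2 \<le> ln (1 - x)" using xnn xhalf by (rule ln_one_minus_pos_lower_bound)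
    have "(1 - x) ^ n = exp (N * ln (1 - x))" using xhalf unfolding N_M_K_def by (intro pow_exp_ln) simp
    also have "\<dots> \<ge> exp (- (ln N * ((1 + y) / 2)))"
    proof -
      have "N * (- x - 2 * x\<^sup>2) \<le> N * ln (1 - x)" using ln1 Npos by (intro mult_left_mono) simp_all
      moreover have "N * (- x - 2 * x\<^sup>2) = - (N * (x + 2 * x\<^sup>2))" by (simp add: algebra_simps)
      ultimately have "- (ln N * ((1 + y) / 2)) \<le> N * ln (1 - x)" using nx by linarith
      then show ?thesis by simp
    qed
    finally have p1: "(1 - x) ^ n \<ge> exp (- (ln N * ((1 + y) / 2)))" .
    have "(1 - x) ^ n \<le> (1 - x) ^ (n - 1)" using xnn xhalf n3 by (intro power_decreasing) simp_all
    also have "\<dots> \<le> q1 ^ (n - 1)" using q1low xhalf by (intro power_mono) simp_all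
    finally have p2: "exp (- (ln N * ((1 + y) / 2))) \<le> q1 ^ (n - 1)" using p1 by simp
    have "N * exp (- (ln N * ((1 + y) / 2))) = exp (((1 - y) / 2) * ln N)"
    proof -
      have "N = exp (ln N)" using Npos by simp
      then have "N * exp (- (ln N * ((1 + y) / 2))) = exp (ln N + - (ln N * ((1 + y) / 2)))"
        by (metis exp_add)
      also have "ln N + - (ln N * ((1 + y) / 2)) = ((1 - y) / 2) * ln N" by (simp add: field_simps)
      finally show ?thesis .
    qed
    moreover have "N * exp (- (ln N * ((1 + y) / 2))) \<le> \<mu>" unfolding \<mu>_def N_M_K_def[symmetric]
      using p2 Npos by (intro mult_left_mono) simp_all
    ultimately have e0: "exp (((1 - y) / 2) * ln N) \<le> \<mu>" by simp
    have ep: "0 < exp (((1 - y) / 2) * ln N)" by simp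
    then have mup: "\<mu> > 0" using e0 by linarith
    have "1 / \<mu> \<le> 1 / exp (((1 - y) / 2) * ln N)"
      by (rule divide_left_mono[OF e0]) (use ep mup in simp_all)
    also have "\<dots> = exp (- ((1 - y) / 2) * ln N)" by (simp add: exp_minus field_simps)
    finally show ?thesis .
  qed
  show ?thesis using main ch t1 t2 unfolding L_def N_M_K_def by linarith
qed

lemma rig_prob_compl:
  assumes "k \<le> m"
  shows "rig_prob n m k P = 1 - rig_prob n m k (\<lambda>F. \<not> P F)"
proof -
  have fin: "finite (rig_space n m k)" unfolding rig_space_def
    by (intro finite_PiE) (auto intro: finite_subset[of _ "Pow {..<m}"])
  have cardpos: "card (rig_space n m k) > 0"
  proof -
    have "rig_space n m k \<noteq> {}"
    proof -
      obtain S where "S \<subseteq> {..<m}" "card S = k" using obtain_subset_with_card_n[of k "{..<m}"] assms by auto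
      then have "(\<lambda>v\<in>{..<n}. S) \<in> rig_space n m k" unfolding rig_space_def by auto
      then show ?thesis by blast
    qed
    then show ?thesis using fin by (simp add: card_gt_0_iff)
  qed
  have "card {F \<in> rig_space n m k. P F} + card {F \<in> rig_space n m k. \<not> P F} = card (rig_space n m k)"
    using fin by (subst card_Un_disjoint[symmetric]) (auto intro: arg_cong[where f=card])
  then have "real (card {F \<in> rig_space n m k. P F}) = real (card (rig_space n m k)) - real (card {F \<in> rig_space n m k. \<not> P F})"
    by linarith
  then show ?thesis unfolding rig_prob_def using cardpos by (simp add: diff_divide_distrib)
qed

lemma rig_prob_le1: "rig_prob n m k P \<le> 1"
proof -
  have fin: "finite (rig_space n m k)" unfolding rig_space_def
    by (intro finite_PiE) (auto intro: finite_subset[of _ "Pow {..<m}"])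
  have "card {F \<in> rig_space n m k. P F} \<le> card (rig_space n m k)" using fin by (intro card_mono) auto
  then show ?thesis unfolding rig_prob_def by (cases "card (rig_space n m k) = 0") (simp_all add: divide_le_eq_1)
qed

theorem theorem5:
  fixes k m :: "nat \<Rightarrow> nat"
  assumes model: "\<forall>n\<ge>1. 1 \<le> k n \<and> k n \<le> m n"
    and mn: "\<forall>n\<ge>1. n \<le> m n"
  shows "(liminf (\<lambda>n. ereal ((real (k n))\<^sup>2 * real n / (real (m n) * ln (real n)))) > 1
            \<longrightarrow> ((\<lambda>n. rig_prob n (m n) (k n) (rig_connected n)) \<longlonglongrightarrow> 1))
       \<and> (limsup (\<lambda>n. ereal ((real (k n))\<^sup>2 * real n / (real (m n) * ln (real n)))) < 1
            \<longrightarrow> ((\<lambda>n. rig_prob n (m n) (k n) (\<lambda>F. \<not> rig_connected n F)) \<longlonglongrightarrow> 1))"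
proof (intro conjI impI)
  define r where "r n = (real (k n))\<^sup>2 * real n / (real (m n) * ln (real n))" for n
  have ev3: "eventually (\<lambda>n::nat. 3 \<le> n) sequentially" by (simp add: eventually_ge_at_top)
  have mpos: "eventually (\<lambda>n. real (m n) * ln (real n) > 0) sequentially"
    using ev3
  proof eventually_elim
    case (elim n)
    then have "n \<le> m n" using mn by auto
    then show ?case using elim by (intro mult_pos_pos) simp_all
  qed
  {
    assume lim: "liminf (\<lambda>n. ereal ((real (k n))\<^sup>2 * real n / (real (m n) * ln (real n)))) > 1"
    obtain z where z: "1 < z" "z < liminf (\<lambda>n. ereal (r n))" using lim unfolding r_def by (meson dense)
    define y where "y = real_of_ereal z"
    have zy: "z = ereal y" unfolding y_def using z by (cases z) auto
    have y1: "y > 1" using z(1) zy by simp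
    have evr: "eventually (\<lambda>n. y < r n) sequentially"
      using less_LiminfD[OF z(2)] zy by simp
    define \<delta> where "\<delta> = min (y - 1) 1"
    have \<delta>: "0 < \<delta>" "\<delta> \<le> 1" "1 + \<delta> \<le> y" unfolding \<delta>_def using y1 by auto
    define \<theta> where "\<theta> = exp (- 16 / \<delta>)"
    have \<theta>pos: "\<theta> > 0" unfolding \<theta>_def by simp
    define C where "C = Max {100, exp (16 / \<delta>), 8 / \<delta>, 8 / \<theta>, 4 * exp (8 / \<theta>)}"
    have C: "100 \<le> C" "exp (16 / \<delta>) \<le> C" "8 / \<delta> \<le> C" "8 / \<theta> \<le> C" "4 * exp (8 / \<theta>) \<le> C"
      unfolding C_def by auto
    have sq: "filterlim (\<lambda>n::nat. sqrt (ln (real n))) at_top sequentially" by real_asymp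
    have evC: "eventually (\<lambda>n. C \<le> sqrt (ln (real n))) sequentially"
      using sq by (simp add: filterlim_at_top)
    have lnf: "filterlim (\<lambda>n::nat. 3/8 * ln (real n)) at_top sequentially" by real_asymp
    have evN1: "eventually (\<lambda>n. ln (8 * exp 1 / \<delta>) \<le> 3/8 * ln (real n)) sequentially"
      using lnf by (simp add: filterlim_at_top)
    have a0: "((\<lambda>n::nat. exp (- (\<delta>/8) * ln (real n))) \<longlongrightarrow> 0) sequentially"
      using \<delta> by real_asymp
    have evN2: "eventually (\<lambda>n. exp (- (\<delta>/8) * ln (real n)) \<le> 1/2) sequentially"
      using order_tendstoD(2)[OF a0, of "1/2"] by (auto elim: eventually_mono)
    define h where "h n = 2 * exp (- (\<delta>/8) * ln (real n)) + 2 * exp (- sqrt (ln (real n)) / 2) + 2 * real n * exp (- real n / 4)" for n :: nat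
    have h0: "(h \<longlongrightarrow> 0) sequentially" unfolding h_def using \<delta> by real_asymp
    have evb: "eventually (\<lambda>n. 1 - h n \<le> rig_prob n (m n) (k n) (rig_connected n)) sequentially"
      using ev3 evr evC evN1 evN2 mpos
    proof eventually_elim
      case (elim n)
      have n3: "3 \<le> n" and ry: "y < r n" and Cn: "C \<le> sqrt (ln (real n))" using elim by auto
      have km: "k n \<le> m n" and k1: "1 \<le> k n" and mnn: "n \<le> m n" using model mn n3 by auto
      have pos: "real (m n) * ln (real n) > 0" using elim by simp
      have hyp0: "y * (real (m n) * ln (real n)) < (real (k n))\<^sup>2 * real n"
        using ry pos unfolding r_def by (simp add: field_simps)
      have "(1 + \<delta>) * (real (m n) * ln (real n)) \<le> y * (real (m n) * ln (real n))"
        using \<delta> pos by (intro mult_right_mono) simp_all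
      then have hyp: "(1 + \<delta>) * real (m n) * ln (real n) \<le> (real (k n))\<^sup>2 * real n"
        using hyp0 by (simp add: mult.assoc)
      have lnpos: "ln (real n) > 0" using n3 by simp
      have kk: "ln (real n) \<le> (real (k n))\<^sup>2"
      proof -
        have "real n * ln (real n) \<le> real (m n) * ln (real n)" using mnn lnpos by (intro mult_right_mono) simp_all
        also have "\<dots> \<le> (1 + \<delta>) * real (m n) * ln (real n)" using \<delta> pos by (simp add: algebra_simps)
        also have "\<dots> \<le> (real (k n))\<^sup>2 * real n" by (rule hyp)
        finally show ?thesis using n3 by (simp add: mult.commute)
      qed
      have Kge: "sqrt (ln (real n)) \<le> real (k n)"
      proof -
        have "sqrt (ln (real n)) \<le> sqrt ((real (k n))\<^sup>2)" using kk by (rule real_sqrt_le_mono)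
        then show ?thesis by simp
      qed
      then have KC: "C \<le> real (k n)" using Cn by simp
      have Kb1: "100 \<le> real (k n)" using KC C by simp
      have Kb2: "16 / \<delta> \<le> ln (real (k n))"
      proof -
        have "exp (16 / \<delta>) \<le> real (k n)" using KC C by simp
        then show ?thesis using Kb1 by (simp add: ln_ge_iff)
      qed
      have Kb3: "8 / \<delta> \<le> real (k n)" using KC C by simp
      have Kt: "8 \<le> real (k n) * \<theta>"
      proof -
        have "8 / \<theta> \<le> real (k n)" using KC C by simp
        then show ?thesis using \<theta>pos by (simp add: field_simps)
      qed
      have Kt2: "8 \<le> \<theta> * ln (real (k n) / 4)"
      proof -
        have "exp (8 / \<theta>) \<le> real (k n) / 4" using KC C by simp
        then have "8 / \<theta> \<le> ln (real (k n) / 4)" using Kb1 by (simp add: ln_ge_iff)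
        then show ?thesis using \<theta>pos by (simp add: field_simps)
      qed
      have n2: "2 \<le> n" using n3 by simp
      have db: "rig_prob n (m n) (k n) (\<lambda>F. \<not> rig_connected n F)
         \<le> 2 * exp (- (\<delta>/8) * ln (real n)) + 2 * exp (- real (k n) / 2) + 2 * real n * exp (- real n / 4)"
        using disc_bound[OF \<delta>(1,2) hyp n2 mnn km k1 Kb1 Kb2 Kb3 _ _ _ _] Kt Kt2 elim unfolding \<theta>_def by auto
      have e: "exp (- real (k n) / 2) \<le> exp (- sqrt (ln (real n)) / 2)" using Kge by simp
      have "rig_prob n (m n) (k n) (\<lambda>F. \<not> rig_connected n F) \<le> h n" unfolding h_def using db e by linarith
      then show ?case using rig_prob_compl[OF km, of n "rig_connected n"] by simp
    qed
    have lo: "((\<lambda>n. 1 - h n) \<longlongrightarrow> 1) sequentially" using tendsto_diff[OF tendsto_const h0, of 1] by simp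
    show "(\<lambda>n. rig_prob n (m n) (k n) (rig_connected n)) \<longlonglongrightarrow> 1"
      by (rule tendsto_sandwich[OF evb _ lo tendsto_const]) (simp add: rig_prob_le1)
  }
  {
    assume lim: "limsup (\<lambda>n. ereal ((real (k n))\<^sup>2 * real n / (real (m n) * ln (real n)))) < 1"
    obtain z where z: "limsup (\<lambda>n. ereal (r n)) < z" "z < 1" using lim unfolding r_def by (meson dense)
    have zfin: "z \<noteq> \<infinity>" "z \<noteq> -\<infinity>" using z by auto
    define y0 where "y0 = real_of_ereal z"
    have zy: "z = ereal y0" unfolding y0_def using zfin by (cases z) auto
    have y01: "y0 < 1" using z(2) zy by simp
    define y where "y = max y0 (1/2)"
    have y: "0 < y" "y < 1" "y0 \<le> y" unfolding y_def using y01 by auto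
    have evr: "eventually (\<lambda>n. r n < y) sequentially"
      using Limsup_lessD[OF z(1)] zy y(3) by (auto elim: eventually_mono)
    have l0: "((\<lambda>n::nat. ln (real n) / real n) \<longlongrightarrow> 0) sequentially" by real_asymp
    have evL1: "eventually (\<lambda>n. ln (real n) / real n \<le> (1 - y) / 20) sequentially"
      using order_tendstoD(2)[OF l0, of "(1 - y)/20"] y by (auto elim: eventually_mono)
    have evL2: "eventually (\<lambda>n. ln (real n) / real n \<le> 1/4) sequentially"
      using order_tendstoD(2)[OF l0, of "1/4"] by (auto elim: eventually_mono)
    define h where "h n = exp (- ((1 - y) / 2) * ln (real n)) + 4 * (ln (real n) / real n)" for n :: nat
    have h0: "(h \<longlongrightarrow> 0) sequentially" unfolding h_def using y by real_asymp
    have evb: "eventually (\<lambda>n. 1 - h n \<le> rig_prob n (m n) (k n) (\<lambda>F. \<not> rig_connected n F)) sequentially"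
      using ev3 evr evL1 evL2 mpos
    proof eventually_elim
      case (elim n)
      have n3: "3 \<le> n" using elim by simp
      have k1: "1 \<le> k n" and mnn: "n \<le> m n" using model mn n3 by auto
      have pos: "real (m n) * ln (real n) > 0" using elim by simp
      have "(real (k n))\<^sup>2 * real n < y * (real (m n) * ln (real n))"
        using elim pos unfolding r_def by (simp add: field_simps)
      then have hyp: "(real (k n))\<^sup>2 * real n \<le> y * real (m n) * ln (real n)" by (simp add: mult.assoc)
      show ?case using notconn_bound[OF y(1,2) hyp n3 mnn k1] elim unfolding h_def by simp
    qed
    have lo: "((\<lambda>n. 1 - h n) \<longlongrightarrow> 1) sequentially" using tendsto_diff[OF tendsto_const h0, of 1] by simp
    show "(\<lambda>n. rig_prob n (m n) (k n) (\<lambda>F. \<not> rig_connected n F)) \<longlonglongrightarrow> 1"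
      by (rule tendsto_sandwich[OF evb _ lo tendsto_const]) (simp add: rig_prob_le1)
  }
qed
end
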